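(* Consider the AHB strategy (described in the context) run with a non-increasing sequence $(\gamma_t)_{t\ge1}$ of extra-exploration rates with $\gamma_t \le 1/2$ for all $t$. Then for all real numbers $m < M$, for all oblivious sequences $y_1, y_2, \dots$ of reward vectors in $[m,M]^K$ and all $T \ge 1$, \[ R_T(y_{1:T}) \le 3(M-m)\sqrt{KT\ln K} + 5(M-m)\frac{K\ln K}{\gamma_T} + (M-m)\sum_{t=K+1}^T \gamma_t . \] In particular, for a parameter $\alpha \in (0,1)$, the choice $\gamma_t = \min\bigl\{1/2,\ \sqrt{5(1-\alpha)K\ln K}\,/\,t^{\alpha}\bigr\}$ ensures, for all $m<M$, all such sequences and all $T\ge1$, \[ R_T(y_{1:T}) \le \Bigl(3 + \frac{5}{\sqrt{1-\alpha}}\Bigr)(M-m)\sqrt{K\ln K}\; T^{\max\{\alpha,1-\alpha\}} + 10(M-m)K\ln K , \] which for $\alpha = 1/2$ reads $R_T(y_{1:T}) \le 7(M-m)\sqrt{TK\ln K} + 10(M-m)K\ln K$.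
   Context: Oblivious adversarial $K$-armed bandits ($K\ge2$): the environment fixes beforehand reward vectors $y_t = (y_{t,a})_{a\in[K]} \in [m,M]^K$, $t\ge1$, with $m<M$ unknown to the player. At each round $t$ the player picks $A_t\in[K]$ (possibly randomized via auxiliary independent uniform variables) and observes only $y_{t,A_t}$. The regret is $R_T(y_{1:T}) = \max_{a\in[K]}\sum_{t=1}^T y_{t,a} - \mathbb{E}[\sum_{t=1}^T y_{t,A_t}]$, the expectation being over the player's randomization. $\ln$ is the natural logarithm. AHB strategy (AdaHedge for $K$-armed bandits with extra-exploration), input $(\gamma_t)_{t\ge1}\subset[0,1]$: for $t=1,\dots,K$ play $A_t=t$ and observe $y_{t,t}$; set $C = \frac1K\sum_{s=1}^K y_{s,s}$, $\eta_{K+1}=+\infty$, $q_{K+1}=(1/K,\dots,1/K)$. For $t\ge K+1$: set $p_t = (1-\gamma_t)q_t + \gamma_t(1/K,\dots,1/K)$; draw $A_t\sim p_t$; observe $y_{t,A_t}$; set $\widehat y_{t,a} = \frac{y_{t,A_t}-C}{p_{t,a}}\mathbf{1}\{A_t=a\} + C$ for all $a$; compute the mixability gap $\delta_t = -\sum_a q_{t,a}\widehat y_{t,a} + \frac1{\eta_t}\ln\bigl(\sum_a q_{t,a} e^{\eta_t \widehat y_{t,a}}\bigr)$ if $\eta_t<\infty$, and $\delta_t = -\sum_a q_{t,a}\widehat y_{t,a} + \max_a \widehat y_{t,a}$ if $\eta_t=+\infty$; set $\eta_{t+1} = \ln K \big/ \sum_{s=K+1}^t \delta_s$; set $q_{t+1,a}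 = \exp\bigl(\eta_{t+1}\sum_{s=K+1}^t \widehat y_{s,a}\bigr)\big/\sum_{k=1}^K \exp\bigl(\eta_{t+1}\sum_{s=K+1}^t \widehat y_{s,k}\bigr)$. *)

theory Defs
  imports Complex_Main
begin

text \<open>Arms are 1..K, rounds are 1,2,...; rewards y t a.
  The internal state after rounds K+1..t-1 is (L, D): L a = sum of estimated
  rewards hat y_{s,a}, D = sum of mixability gaps delta_s (so eta_t = ln K / D,
  with eta_t = +infinity iff D = 0).\<close>

definition ahb_C :: "nat \<Rightarrow> (nat \<Rightarrow> nat \<Rightarrow> real) \<Rightarrow> real" where
  "ahb_C K y = (\<Sum>s=1..K. y s s) / real K"

definition ahb_eta :: "nat \<Rightarrow> real \<Rightarrow> real" where
  "ahb_eta K D = ln (real K) / D"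

text \<open>Leaders (used when eta = +infinity, the standard AdaHedge convention;
  this gives the uniform distribution at t = K+1).\<close>
definition ahb_leaders :: "nat \<Rightarrow> (nat \<Rightarrow> real) \<Rightarrow> nat set" where
  "ahb_leaders K L = {a \<in> {1..K}. \<forall>b\<in>{1..K}. L b \<le> L a}"

definition ahb_q :: "nat \<Rightarrow> (nat \<Rightarrow> real) \<times> real \<Rightarrow> nat \<Rightarrow> real" where
  "ahb_q K st a = (let L = fst st; D = snd st in
     if D = 0 then (if a \<in> ahb_leaders K L then 1 / real (card (ahb_leaders K L)) else 0)
     else exp (ahb_eta K D * L a) / (\<Sum>k=1..K. exp (ahb_eta K D * L k)))"

definition ahb_p :: "nat \<Rightarrow> (nat \<Rightarrow> real) \<Rightarrow> nat \<Rightarrow> (nat \<Rightarrow> real) \<times> real \<Rightarrow> nat \<Rightarrow> real" where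
  "ahb_p K \<gamma> t st a = (1 - \<gamma> t) * ahb_q K st a + \<gamma> t / real K"

definition ahb_yhat :: "nat \<Rightarrow> (nat \<Rightarrow> real) \<Rightarrow> (nat \<Rightarrow> nat \<Rightarrow> real) \<Rightarrow> nat
    \<Rightarrow> (nat \<Rightarrow> real) \<times> real \<Rightarrow> nat \<Rightarrow> nat \<Rightarrow> real" where
  "ahb_yhat K \<gamma> y t st A a =
     (if a = A then (y t A - ahb_C K y) / ahb_p K \<gamma> t st a else 0) + ahb_C K y"

definition ahb_delta :: "nat \<Rightarrow> (nat \<Rightarrow> real) \<times> real \<Rightarrow> (nat \<Rightarrow> real) \<Rightarrow> real" where
  "ahb_delta K st yh = (let D = snd st; \<eta> = ahb_eta K D in
     if D = 0 then - (\<Sum>a=1..K. ahb_q K st a * yh a) + Max (yh ` {1..K})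
     else - (\<Sum>a=1..K. ahb_q K st a * yh a)
          + (1 / \<eta>) * ln (\<Sum>a=1..K. ahb_q K st a * exp (\<eta> * yh a)))"

definition ahb_update :: "nat \<Rightarrow> (nat \<Rightarrow> real) \<Rightarrow> (nat \<Rightarrow> nat \<Rightarrow> real) \<Rightarrow> nat
    \<Rightarrow> (nat \<Rightarrow> real) \<times> real \<Rightarrow> nat \<Rightarrow> (nat \<Rightarrow> real) \<times> real" where
  "ahb_update K \<gamma> y t st A = (let yh = ahb_yhat K \<gamma> y t st A in
     (\<lambda>a. fst st a + yh a, snd st + ahb_delta K st yh))"

text \<open>Expected total reward collected during n rounds t, t+1, ..., t+n-1,
  starting from internal state st (exact expectation over the randomization:
  A_t is drawn according to the probability vector p_t).\<close>
fun ahb_exp_reward :: "nat \<Rightarrow> (nat \<Rightarrow> real) \<Rightarrow> (nat \<Rightarrow> nat \<Rightarrow> real) \<Rightarrow> nat \<Rightarrow> nat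
    \<Rightarrow> (nat \<Rightarrow> real) \<times> real \<Rightarrow> real" where
  "ahb_exp_reward K \<gamma> y 0 t st = 0"
| "ahb_exp_reward K \<gamma> y (Suc n) t st =
     (\<Sum>a=1..K. ahb_p K \<gamma> t st a *
        (y t a + ahb_exp_reward K \<gamma> y n (Suc t) (ahb_update K \<gamma> y t st a)))"

text \<open>Expected cumulative reward of AHB over rounds 1..T: rounds 1..K are
  deterministic (A_t = t); rounds K+1..T are randomized, starting from
  L = 0, D = 0 (eta_{K+1} = +infinity, q_{K+1} uniform).\<close>
definition ahb_total :: "nat \<Rightarrow> (nat \<Rightarrow> real) \<Rightarrow> (nat \<Rightarrow> nat \<Rightarrow> real) \<Rightarrow> nat \<Rightarrow> real" where
  "ahb_total K \<gamma> y T =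
     (\<Sum>t=1..min T K. y t t) + ahb_exp_reward K \<gamma> y (T - K) (Suc K) (\<lambda>_. 0, 0)"

definition ahb_regret :: "nat \<Rightarrow> (nat \<Rightarrow> real) \<Rightarrow> (nat \<Rightarrow> nat \<Rightarrow> real) \<Rightarrow> nat \<Rightarrow> real" where
  "ahb_regret K \<gamma> y T = Max ((\<lambda>a. \<Sum>t=1..T. y t a) ` {1..K}) - ahb_total K \<gamma> y T"

end

theory Submission
  imports Defs "HOL-Analysis.Convex" "HOL-Analysis.Harmonic_Numbers"
begin

lemma exp_ineq3: "exp u * (3 - u) \<le> 3 + 2*u + u^2/2" for u :: real
proof -
  define k where "k x = 2 + x - exp x * (2 - x)" for x :: real
  define g where "g x = 3 + 2*x + x^2/2 - exp x * (3 - x)" for x :: real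
  have kd: "DERIV k x :> 1 - exp x * (1 - x)" for x
    unfolding k_def by (rule derivative_eq_intros refl | simp add: algebra_simps)+
  have kn: "1 - exp x * (1 - x) \<ge> 0" for x :: real
  proof -
    have "1 - x \<le> exp (-x)" using exp_ge_add_one_self[of "-x"] by simp
    hence "exp x * (1 - x) \<le> exp x * exp (-x)" by (simp add: mult_left_mono)
    thus ?thesis by (simp add: exp_minus)
  qed
  have kmono: "k a \<le> k b" if "a \<le> b" for a b
    by (rule DERIV_nonneg_imp_nondecreasing[OF that]) (use kd kn in blast)
  have k0: "k 0 = 0" by (simp add: k_def)
  have gd: "DERIV g x :> k x" for x
    unfolding g_def k_def by (rule derivative_eq_intros refl | simp add: algebra_simps)+
  have g0: "g 0 = 0" by (simp add: g_def)
  have "g u \<ge> 0"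
  proof (cases "u \<ge> 0")
    case True
    have "g 0 \<le> g u"
      by (rule DERIV_nonneg_imp_nondecreasing[OF True]) (use gd kmono k0 in fastforce)
    thus ?thesis using g0 by simp
  next
    case False
    have "g u \<ge> g 0"
      by (rule DERIV_nonpos_imp_nonincreasing[of u 0]) (use gd kmono k0 False in fastforce)+
    thus ?thesis using g0 by simp
  qed
  thus ?thesis by (simp add: g_def)
qed

lemma bern_step:
  fixes q x :: "nat \<Rightarrow> real" and I :: "nat set" and \<eta> S :: real
  defines "\<mu> \<equiv> (\<Sum>a\<in>I. q a * x a)"
  defines "d \<equiv> ln (\<Sum>a\<in>I. q a * exp (\<eta> * x a)) / \<eta> - \<mu>"
  assumes fin: "finite I" and qn: "\<And>a. a \<in> I \<Longrightarrow> q a \<ge> 0" and qs: "sum q I = 1"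
    and eta: "\<eta> > 0" and S: "\<And>a. a \<in> I \<Longrightarrow> x a \<le> \<mu> + S"
  shows "0 \<le> d" "d \<le> S" "d * (1/\<eta> - S/3) \<le> (\<Sum>a\<in>I. q a * (x a - \<mu>)^2) / 2"
proof -
  define u where "u a = \<eta> * (x a - \<mu>)" for a
  define P where "P = (\<Sum>a\<in>I. q a * exp (u a))"
  define w where "w = (\<Sum>a\<in>I. q a * (x a - \<mu>)^2)"
  have w0: "w \<ge> 0" unfolding w_def by (intro sum_nonneg) (simp add: qn)
  have Zeq: "(\<Sum>a\<in>I. q a * exp (\<eta> * x a)) = exp (\<eta> * \<mu>) * P"
    unfolding P_def sum_distrib_left
  proof (rule sum.cong[OF refl])
    fix a assume "a \<in> I"
    have "exp (\<eta> * x a) = exp (\<eta> * \<mu>) * exp (u a)"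
      by (simp add: u_def exp_add[symmetric] algebra_simps)
    thus "q a * exp (\<eta> * x a) = exp (\<eta> * \<mu>) * (q a * exp (u a))" by simp
  qed
  have usum: "(\<Sum>a\<in>I. q a * u a) = 0"
  proof -
    have "(\<Sum>a\<in>I. q a * u a) = \<eta> * (\<Sum>a\<in>I. q a * x a) - \<eta> * \<mu> * (\<Sum>a\<in>I. q a)"
      by (simp add: u_def sum_distrib_left sum_subtractf algebra_simps)
    thus ?thesis by (simp add: qs \<mu>_def)
  qed
  have P1: "P \<ge> 1"
  proof -
    have "(\<Sum>a\<in>I. q a * (1 + u a)) \<le> P"
      unfolding P_def by (intro sum_mono mult_left_mono) (auto simp: qn exp_ge_add_one_self)
    moreover have "(\<Sum>a\<in>I. q a * (1 + u a)) = 1"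
      by (simp add: algebra_simps sum.distrib qs usum)
    ultimately show ?thesis by simp
  qed
  have deq: "d = ln P / \<eta>"
  proof -
    have "ln (exp (\<eta> * \<mu>) * P) = \<eta> * \<mu> + ln P" using P1 by (simp add: ln_mult)
    thus ?thesis unfolding d_def Zeq using eta by (simp add: field_simps)
  qed
  show d0: "0 \<le> d" unfolding deq using P1 eta by simp
  have PS: "P \<le> exp (\<eta> * S)"
  proof -
    have "P \<le> (\<Sum>a\<in>I. q a * exp (\<eta> * S))"
      unfolding P_def
    proof (intro sum_mono mult_left_mono)
      fix a assume "a \<in> I"
      thus "exp (u a) \<le> exp (\<eta> * S)" using S[of a] eta by (simp add: u_def)
      show "0 \<le> q a" using \<open>a \<in> I\<close> qn by simp
    qed
    also have "\<dots> = exp (\<eta> * S)" by (simp add: sum_distrib_right[symmetric] qs)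
    finally show ?thesis .
  qed
  show "d \<le> S"
  proof -
    have "ln P \<le> \<eta> * S" using PS P1 by (metis exp_gt_zero less_le_trans ln_exp ln_le_cancel_iff zero_less_one)
    thus ?thesis unfolding deq using eta by (simp add: divide_le_eq mult.commute)
  qed
  show "d * (1/\<eta> - S/3) \<le> (\<Sum>a\<in>I. q a * (x a - \<mu>)^2) / 2"
  proof (cases "\<eta> * S \<ge> 3")
    case True
    have "1/\<eta> - S/3 \<le> 0" using True eta by (simp add: field_simps)
    hence "d * (1/\<eta> - S/3) \<le> 0" using d0 by (simp add: mult_nonneg_nonpos)
    thus ?thesis using w0 unfolding w_def by linarith
  next
    case False
    define \<sigma> where "\<sigma> = \<eta> * S"
    have s3: "\<sigma> < 3" using False \<sigma>_def by simp
    have eb: "exp (u a) \<le> 1 + u a + 3/2 * (u a)^2 / (3 - \<sigma>)" if "a \<in> I" for a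
    proof -
      have ua: "u a \<le> \<sigma>" using S[OF that] eta by (simp add: u_def \<sigma>_def)
      have pos: "3 - u a > 0" "3 - \<sigma> > 0" using ua s3 by auto
      have "exp (u a) * (3 - u a) \<le> 3 + 2 * u a + (u a)^2/2" by (rule exp_ineq3)
      hence "exp (u a) \<le> (3 + 2 * u a + (u a)^2/2) / (3 - u a)" using pos by (simp add: field_simps)
      also have "\<dots> = 1 + u a + 3/2 * (u a)^2 / (3 - u a)" using pos by (simp add: field_simps power2_eq_square)
      also have "3/2 * (u a)^2 / (3 - u a) \<le> 3/2 * (u a)^2 / (3 - \<sigma>)"
        using pos ua by (intro divide_left_mono) auto
      finally show ?thesis by simp
    qed
    have "P \<le> (\<Sum>a\<in>I. q a * (1 + u a + 3/2 * (u a)^2 / (3 - \<sigma>)))"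
      unfolding P_def
    proof (intro sum_mono mult_left_mono)
      fix a assume a: "a \<in> I"
      show "exp (u a) \<le> 1 + u a + 3/2 * (u a)^2 / (3 - \<sigma>)" by (rule eb[OF a])
      show "0 \<le> q a" using qn[OF a] .
    qed
    also have "\<dots> = 1 + 3/2 * \<eta>^2 * w / (3 - \<sigma>)"
    proof -
      have pt: "q a * (1 + u a + 3/2 * (u a)^2 / (3 - \<sigma>)) = q a + q a * u a + (3/2 * \<eta>^2 / (3 - \<sigma>)) * (q a * (x a - \<mu>)^2)" for a
        by (simp add: u_def power_mult_distrib field_simps power2_eq_square)
      have "(\<Sum>a\<in>I. q a * (1 + u a + 3/2 * (u a)^2 / (3 - \<sigma>)))
          = (\<Sum>a\<in>I. q a) + (\<Sum>a\<in>I. q a * u a) + 3/2 * \<eta>^2 / (3 - \<sigma>) * (\<Sum>a\<in>I. q a * (x a - \<mu>)^2)"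
        unfolding pt by (simp add: sum.distrib sum_distrib_left)
      thus ?thesis by (simp add: qs usum w_def)
    qed
    finally have Pb: "P \<le> 1 + 3/2 * \<eta>^2 * w / (3 - \<sigma>)" .
    have "ln P \<le> P - 1" using P1 by (intro ln_le_minus_one) simp
    hence lnP: "ln P \<le> 3/2 * \<eta>^2 * w / (3 - \<sigma>)" using Pb by simp
    have "d * (1/\<eta> - S/3) = ln P * (3 - \<sigma>) / (3 * \<eta>^2)"
      unfolding deq \<sigma>_def using eta by (simp add: field_simps power2_eq_square)
    also have "\<dots> \<le> (3/2 * \<eta>^2 * w / (3 - \<sigma>)) * (3 - \<sigma>) / (3 * \<eta>^2)"
      using lnP s3 eta by (intro divide_right_mono mult_right_mono) auto
    also have "\<dots> = w / 2" using s3 eta by (simp add: field_simps power2_eq_square)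
    finally show ?thesis by (simp add: w_def)
  qed
qed

lemma exp_convex_ineq: "0 \<le> r \<Longrightarrow> r \<le> 1 \<Longrightarrow> exp (r * w) \<le> 1 - r + r * exp w" for r w :: real
  using convex_onD[OF exp_convex, of r 0 w] by simp

lemma leaders_ne: "K \<ge> 1 \<Longrightarrow> ahb_leaders K L \<noteq> {}"
proof -
  assume K: "K \<ge> 1"
  have ne: "L ` {1..K} \<noteq> {}" using K by auto
  obtain a where a: "a \<in> {1..K}" "L a = Max (L ` {1..K})"
    using Max_in[OF _ ne] by auto
  have "a \<in> ahb_leaders K L" unfolding ahb_leaders_def using a by auto
  thus ?thesis by auto
qed

lemma leaders_sub: "ahb_leaders K L \<subseteq> {1..K}" unfolding ahb_leaders_def by auto

lemma q_nonneg: "ahb_q K st a \<ge> 0"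
  unfolding ahb_q_def Let_def by (auto intro!: divide_nonneg_pos sum_pos2 simp: sum_nonneg)

lemma q_sum: assumes K: "K \<ge> 1" shows "(\<Sum>a=1..K. ahb_q K st a) = 1"
proof (cases "snd st = 0")
  case True
  let ?Ld = "ahb_leaders K (fst st)"
  have fin: "finite ?Ld" using leaders_sub finite_subset by blast
  have ne: "?Ld \<noteq> {}" using leaders_ne K by blast
  have "(\<Sum>a=1..K. ahb_q K st a) = (\<Sum>a=1..K. if a \<in> ?Ld then 1 / real (card ?Ld) else 0)"
    unfolding ahb_q_def Let_def using True by simp
  also have "\<dots> = (\<Sum>a\<in>?Ld. 1 / real (card ?Ld))"
    using leaders_sub[of K "fst st"] by (simp add: sum.If_cases Int_absorb1)
  also have "\<dots> = 1" using fin ne by simp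
  finally show ?thesis .
next
  case False
  let ?e = "\<lambda>a. exp (ahb_eta K (snd st) * fst st a)"
  have pos: "(\<Sum>k=1..K. ?e k) > 0" using K by (intro sum_pos) auto
  have "(\<Sum>a=1..K. ahb_q K st a) = (\<Sum>a=1..K. ?e a / (\<Sum>k=1..K. ?e k))"
    unfolding ahb_q_def Let_def using False by simp
  also have "\<dots> = 1" using pos by (simp add: sum_divide_distrib[symmetric])
  finally show ?thesis .
qed

lemma q_le1: assumes K: "K \<ge> 1" and a: "a \<in> {1..K}" shows "ahb_q K st a \<le> 1"
proof -
  have "ahb_q K st a \<le> (\<Sum>b=1..K. ahb_q K st b)"
    using a by (intro member_le_sum) (auto simp: q_nonneg)
  thus ?thesis using q_sum[OF K] by simp
qed

definition Phi :: "nat \<Rightarrow> real \<Rightarrow> (nat \<Rightarrow> real) \<Rightarrow> real" where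
  "Phi K D L = (if D = 0 then Max (L ` {1..K})
     else ln ((\<Sum>a=1..K. exp (ahb_eta K D * L a)) / real K) / ahb_eta K D)"

lemma Max_ge': "(K::nat) \<ge> 1 \<Longrightarrow> a \<in> {1..K} \<Longrightarrow> (L a::real) \<le> Max (L ` {1..K})"
  by (intro Max_ge) auto

lemma Max_obtain: assumes "(K::nat) \<ge> 1" obtains a where "a \<in> {1..K}" "Max (L ` {1..K}) = (L a :: real)"
proof -
  have ne: "L ` {1..K} \<noteq> {}" using assms by auto
  show ?thesis using Max_in[OF _ ne] that by auto
qed

context
  fixes K :: nat assumes K2: "K \<ge> 2"
begin

lemma lnK: "ln (real K) > 0" using K2 by simp

lemma eta_pos: "D > 0 \<Longrightarrow> ahb_eta K D > 0"
  unfolding ahb_eta_def using lnK by simp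

lemma phi_le_max: assumes D: "D > 0" shows "Phi K D L \<le> Max (L ` {1..K})"
proof -
  let ?\<eta> = "ahb_eta K D" let ?M = "Max (L ` {1..K})"
  have e: "?\<eta> > 0" using eta_pos D by simp
  have "(\<Sum>a=1..K. exp (?\<eta> * L a)) \<le> (\<Sum>a=1..K. exp (?\<eta> * ?M))"
    using K2 e by (intro sum_mono) (auto intro!: mult_left_mono Max_ge')
  also have "\<dots> = real K * exp (?\<eta> * ?M)" by simp
  finally have Z: "(\<Sum>a=1..K. exp (?\<eta> * L a)) / real K \<le> exp (?\<eta> * ?M)" using K2
    by (simp add: divide_le_eq mult.commute)
  have Zp: "(\<Sum>a=1..K. exp (?\<eta> * L a)) / real K > 0" using K2 by (intro divide_pos_pos sum_pos) auto
  have "ln ((\<Sum>a=1..K. exp (?\<eta> * L a)) / real K) \<le> ?\<eta> * ?M"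
    using Z Zp by (metis ln_exp ln_le_cancel_iff exp_gt_zero)
  thus ?thesis unfolding Phi_def using D e by (simp add: divide_le_eq mult.commute)
qed

lemma phi_ge: assumes D: "D > 0" shows "Phi K D L \<ge> Max (L ` {1..K}) - D"
proof -
  let ?\<eta> = "ahb_eta K D" let ?M = "Max (L ` {1..K})"
  have e: "?\<eta> > 0" using eta_pos D by simp
  obtain b where b: "b \<in> {1..K}" "?M = L b" using Max_obtain K2 by (metis one_le_numeral order_trans)
  have "exp (?\<eta> * L b) \<le> (\<Sum>a=1..K. exp (?\<eta> * L a))"
    using b by (intro member_le_sum) auto
  hence Z: "exp (?\<eta> * ?M) / real K \<le> (\<Sum>a=1..K. exp (?\<eta> * L a)) / real K"
    using b K2 by (simp add: divide_right_mono)
  have "ln (exp (?\<eta> * ?M) / real K) = ?\<eta> * ?M - ln (real K)" using K2 by (simp add: ln_div)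
  moreover have "ln (exp (?\<eta> * ?M) / real K) \<le> ln ((\<Sum>a=1..K. exp (?\<eta> * L a)) / real K)"
    using Z K2 by (intro ln_mono) auto
  ultimately have "?\<eta> * ?M - ln (real K) \<le> ln ((\<Sum>a=1..K. exp (?\<eta> * L a)) / real K)" by simp
  hence "(?\<eta> * ?M - ln (real K)) / ?\<eta> \<le> Phi K D L" unfolding Phi_def using D e
    by (simp add: divide_right_mono)
  moreover have "(?\<eta> * ?M - ln (real K)) / ?\<eta> = ?M - D"
    using e D lnK by (simp add: ahb_eta_def field_simps)
  ultimately show ?thesis by simp
qed

lemma phi_shift: assumes D: "D > 0"
  shows "Phi K D (\<lambda>a. L a + x a) = Phi K D L
     + ln (\<Sum>a=1..K. ahb_q K (L, D) a * exp (ahb_eta K D * x a)) / ahb_eta K D"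
proof -
  let ?\<eta> = "ahb_eta K D"
  define Z where "Z = (\<Sum>a=1..K. exp (?\<eta> * L a))"
  define Z' where "Z' = (\<Sum>a=1..K. exp (?\<eta> * (L a + x a)))"
  have Zp: "Z > 0" unfolding Z_def using K2 by (intro sum_pos) auto
  have Z'p: "Z' > 0" unfolding Z'_def using K2 by (intro sum_pos) auto
  have "(\<Sum>a=1..K. ahb_q K (L, D) a * exp (?\<eta> * x a)) = (\<Sum>a=1..K. exp (?\<eta> * (L a + x a)) / Z)"
    unfolding ahb_q_def Let_def Z_def using D
    by (intro sum.cong) (auto simp: distrib_left exp_add)
  also have "\<dots> = Z' / Z" unfolding Z'_def by (simp add: sum_divide_distrib)
  finally have qe: "(\<Sum>a=1..K. ahb_q K (L, D) a * exp (?\<eta> * x a)) = Z' / Z" .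
  have "ln (Z' / real K) = ln (Z / real K) + ln (Z' / Z)"
    using Zp Z'p K2 by (simp add: ln_div)
  thus ?thesis unfolding Phi_def qe using D by (simp add: Z_def Z'_def add_divide_distrib)
qed

lemma phi_anti: assumes D: "0 < D" "D \<le> D'" shows "Phi K D' L \<le> Phi K D L"
proof -
  define \<eta> where "\<eta> = ahb_eta K D"
  define \<eta>' where "\<eta>' = ahb_eta K D'"
  have e: "\<eta> > 0" "\<eta>' > 0" using eta_pos D unfolding \<eta>_def \<eta>'_def by auto
  define r where "r = D / D'"
  have r: "0 < r" "r \<le> 1" using D unfolding r_def by auto
  have er: "\<eta>' = r * \<eta>" unfolding \<eta>'_def \<eta>_def ahb_eta_def r_def using D by (simp add: field_simps)
  define m where "m = (\<Sum>a=1..K. exp (\<eta> * L a)) / real K"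
  have mp: "m > 0" unfolding m_def using K2 by (intro divide_pos_pos sum_pos) auto
  define w where "w a = \<eta> * L a - ln m" for a
  have ew: "exp (w a) = exp (\<eta> * L a) / m" for a unfolding w_def using mp by (simp add: exp_diff)
  have e1: "exp (\<eta>' * L a) = exp (r * ln m) * exp (r * w a)" for a
    unfolding er w_def by (simp add: exp_add[symmetric] algebra_simps)
  have "(\<Sum>a=1..K. exp (r * w a)) \<le> (\<Sum>a=1..K. 1 - r + r * exp (w a))"
    using r by (intro sum_mono exp_convex_ineq) auto
  also have "\<dots> = real K * (1 - r) + r * (\<Sum>a=1..K. exp (\<eta> * L a)) / m"
    by (simp add: sum.distrib sum_distrib_left ew sum_divide_distrib)
  also have "\<dots> = real K" using mp K2 unfolding m_def by (simp add: field_simps)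
  finally have s1: "(\<Sum>a=1..K. exp (r * w a)) \<le> real K" .
  have "(\<Sum>a=1..K. exp (\<eta>' * L a)) / real K = exp (r * ln m) * ((\<Sum>a=1..K. exp (r * w a)) / real K)"
    by (simp add: e1 sum_distrib_left)
  also have "\<dots> \<le> exp (r * ln m)" using s1 K2 by (simp add: mult_left_le divide_le_eq)
  finally have s2: "(\<Sum>a=1..K. exp (\<eta>' * L a)) / real K \<le> exp (r * ln m)" .
  have pos2: "(\<Sum>a=1..K. exp (\<eta>' * L a)) / real K > 0" using K2 by (intro divide_pos_pos sum_pos) auto
  have "ln ((\<Sum>a=1..K. exp (\<eta>' * L a)) / real K) \<le> r * ln m"
    using s2 pos2 by (metis ln_exp ln_le_cancel_iff exp_gt_zero)
  hence "ln ((\<Sum>a=1..K. exp (\<eta>' * L a)) / real K) / \<eta>' \<le> r * ln m / \<eta>'"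
    using e by (simp add: divide_right_mono)
  also have "r * ln m / \<eta>' = ln m / \<eta>" using r e er by simp
  finally show ?thesis unfolding Phi_def using D \<eta>_def \<eta>'_def m_def by simp
qed

end

locale ahbs =
  fixes K :: nat and \<gamma> :: "nat \<Rightarrow> real" and y :: "nat \<Rightarrow> nat \<Rightarrow> real" and m M g0 :: real
  assumes K2: "K \<ge> 2" and g0: "g0 > 0"
    and gam: "\<And>t. t \<ge> 1 \<Longrightarrow> g0 \<le> \<gamma> t \<and> \<gamma> t \<le> 1/2"
    and ybd: "\<And>t a. t \<ge> 1 \<Longrightarrow> a \<in> {1..K} \<Longrightarrow> m \<le> y t a \<and> y t a \<le> M"
begin

abbreviation "p \<equiv> ahb_p K \<gamma>"
abbreviation "C \<equiv> ahb_C K y"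
abbreviation "yh \<equiv> ahb_yhat K \<gamma> y"
definition "S = (M - m) * real K / g0"
definition "zz t st A = (y t A - C) / p t st A"
definition "vv t st A = (\<Sum>a=1..K. ahb_q K st a * (yh t st A a - C)^2)"
definition "gq t st A = (\<Sum>a=1..K. ahb_q K st a * yh t st A a)"

lemma K1: "K \<ge> 1" using K2 by simp

lemma mM: "m \<le> M" using ybd[of 1 1] K2 by auto

lemma C_bd: "m \<le> C \<and> C \<le> M"
proof -
  have "real K * m \<le> (\<Sum>s=1..K. y s s)"
    using sum_mono[of "{1..K}" "\<lambda>_. m" "\<lambda>s. y s s"] ybd by auto
  moreover have "(\<Sum>s=1..K. y s s) \<le> real K * M"
    using sum_mono[of "{1..K}" "\<lambda>s. y s s" "\<lambda>_. M"] ybd by auto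
  ultimately show ?thesis unfolding ahb_C_def using K2 by (simp add: field_simps)
qed

lemma S_nonneg: "S \<ge> 0" unfolding S_def using mM g0 by simp

lemma p_ge: assumes "t \<ge> 1" shows "p t st a \<ge> g0 / real K"
proof -
  have "(1 - \<gamma> t) * ahb_q K st a \<ge> 0" using gam[OF assms] q_nonneg by simp
  moreover have "\<gamma> t / real K \<ge> g0 / real K" using gam[OF assms] by (simp add: divide_right_mono)
  ultimately show ?thesis unfolding ahb_p_def by simp
qed

lemma p_pos: assumes "t \<ge> 1" shows "p t st a > 0"
proof -
  have "g0 / real K > 0" using g0 K2 by simp
  thus ?thesis using p_ge[OF assms, of st a] by linarith
qed

lemma p_nonneg: "t \<ge> 1 \<Longrightarrow> p t st a \<ge> 0" using p_pos[of t st a] by simp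

lemma p_sum: assumes "t \<ge> 1" shows "(\<Sum>a=1..K. p t st a) = 1"
proof -
  have "(\<Sum>a=1..K. p t st a) = (1 - \<gamma> t) * (\<Sum>a=1..K. ahb_q K st a) + \<gamma> t"
    unfolding ahb_p_def using K2 by (simp add: sum.distrib sum_distrib_left)
  thus ?thesis using q_sum[OF K1] by simp
qed

lemma q_le_2p: assumes "t \<ge> 1" shows "ahb_q K st a \<le> 2 * p t st a"
proof -
  have h: "1 \<le> 2 * (1 - \<gamma> t)" using gam[OF assms] by simp
  have "ahb_q K st a * 1 \<le> ahb_q K st a * (2 * (1 - \<gamma> t))"
    using q_nonneg[of K st a] h by (intro mult_left_mono) auto
  hence "ahb_q K st a \<le> 2 * ((1 - \<gamma> t) * ahb_q K st a)" by (simp add: algebra_simps)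
  also have "\<dots> \<le> 2 * p t st a" unfolding ahb_p_def using gam[OF assms] g0 by simp
  finally show ?thesis .
qed

lemma zz_bd: assumes "t \<ge> 1" "A \<in> {1..K}" shows "\<bar>zz t st A\<bar> \<le> S"
proof -
  have y: "\<bar>y t A - C\<bar> \<le> M - m" using ybd[OF assms] C_bd by auto
  have pp: "p t st A \<ge> g0 / real K" "p t st A > 0" using p_ge p_pos assms by auto
  have "\<bar>zz t st A\<bar> = \<bar>y t A - C\<bar> / p t st A" unfolding zz_def using pp by (simp add: abs_div)
  also have "\<dots> \<le> (M - m) / (g0 / real K)"
    using y pp g0 K2 mM by (intro frac_le) auto
  also have "\<dots> = S" unfolding S_def by simp
  finally show ?thesis .
qed

lemma yh_eq: "yh t st A a = (if a = A then zz t st A else 0) + C"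
  unfolding ahb_yhat_def zz_def by simp

lemma gq_eq: assumes "A \<in> {1..K}" shows "gq t st A = C + ahb_q K st A * zz t st A"
proof -
  have "gq t st A = (\<Sum>a=1..K. ahb_q K st a * (if a = A then zz t st A else 0)) + C * (\<Sum>a=1..K. ahb_q K st a)"
    unfolding gq_def yh_eq by (simp add: distrib_left sum.distrib sum_distrib_left mult.commute)
  also have "\<dots> = ahb_q K st A * zz t st A + C"
    using assms q_sum[OF K1] by (simp add: if_distrib sum.delta cong: if_cong)
  finally show ?thesis by simp
qed

lemma vv_eq: assumes "A \<in> {1..K}" shows "vv t st A = ahb_q K st A * (zz t st A)^2"
proof -
  have "vv t st A = (\<Sum>a=1..K. if a = A then ahb_q K st A * (zz t st A)^2 else 0)"
    unfolding vv_def yh_eq by (intro sum.cong) auto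
  thus ?thesis using assms by simp
qed

lemma vv_nonneg: "vv t st A \<ge> 0" unfolding vv_def by (intro sum_nonneg mult_nonneg_nonneg q_nonneg) auto

lemma yh_le: assumes "t \<ge> 1" "A \<in> {1..K}" "a \<in> {1..K}" shows "yh t st A a \<le> gq t st A + S"
proof -
  let ?q = "ahb_q K st A" let ?z = "zz t st A"
  have q: "0 \<le> ?q" "?q \<le> 1" using q_nonneg q_le1[OF K1 assms(2)] by auto
  have z: "\<bar>?z\<bar> \<le> S" using zz_bd assms by auto
  have "(if a = A then ?z else 0) - ?q * ?z \<le> S"
  proof (cases "a = A")
    case True
    have "?z - ?q * ?z = (1 - ?q) * ?z" by (simp add: algebra_simps)
    also have "\<dots> \<le> (1 - ?q) * \<bar>?z\<bar>" using q by (intro mult_left_mono) auto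
    also have "\<dots> \<le> \<bar>?z\<bar>" using q by (simp add: mult_left_le_one_le)
    finally show ?thesis using True z by simp
  next
    case False
    have "- (?q * ?z) \<le> ?q * \<bar>?z\<bar>" using q by (metis abs_ge_minus_self abs_mult abs_of_nonneg minus_mult_right)
    also have "\<dots> \<le> \<bar>?z\<bar>" using q by (simp add: mult_left_le_one_le)
    finally show ?thesis using False z by simp
  qed
  thus ?thesis unfolding yh_eq gq_eq[OF assms(2)] by simp
qed

lemma var_le: assumes "A \<in> {1..K}"
  shows "(\<Sum>a=1..K. ahb_q K st a * (yh t st A a - gq t st A)^2) \<le> vv t st A"
proof -
  let ?q = "ahb_q K st" let ?x = "yh t st A" let ?mu = "gq t st A"
  have qs: "(\<Sum>a=1..K. ?q a) = 1" using q_sum[OF K1] by blast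
  have e2: "(\<Sum>a=1..K. 2 * (?q a * ?x a) - (C + ?mu) * ?q a) = 2 * ?mu - (C + ?mu) * (\<Sum>a=1..K. ?q a)"
    unfolding gq_def by (simp add: sum_subtractf sum_distrib_left)
  have "vv t st A - (\<Sum>a=1..K. ?q a * (?x a - ?mu)^2) = (\<Sum>a=1..K. ?q a * ((?x a - C)^2 - (?x a - ?mu)^2))"
    unfolding vv_def by (simp add: sum_subtractf right_diff_distrib)
  also have "\<dots> = (\<Sum>a=1..K. (?mu - C) * (2 * (?q a * ?x a) - (C + ?mu) * ?q a))"
    by (intro sum.cong) (auto simp: power2_eq_square algebra_simps)
  also have "\<dots> = (?mu - C) * (\<Sum>a=1..K. 2 * (?q a * ?x a) - (C + ?mu) * ?q a)"
    by (simp add: sum_distrib_left)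
  also have "\<dots> = (?mu - C) * (2 * ?mu - (C + ?mu))" unfolding e2 qs by simp
  also have "\<dots> = (?mu - C)^2" by (simp add: power2_eq_square algebra_simps)
  finally have h: "vv t st A - (\<Sum>a=1..K. ?q a * (?x a - ?mu)^2) = (?mu - C)^2" .
  have "(?mu - C)^2 \<ge> 0" by simp
  thus ?thesis using h by linarith
qed

end

context ahbs begin

lemma E_vv: assumes t: "t \<ge> 1" shows "(\<Sum>A=1..K. p t st A * vv t st A) \<le> 2 * real K * (M - m)^2"
proof -
  have "(\<Sum>A=1..K. p t st A * vv t st A) \<le> (\<Sum>A=1..K. 2 * (M - m)^2)"
  proof (intro sum_mono)
    fix A assume A: "A \<in> {1..K}"
    have pp: "p t st A > 0" using p_pos t by auto
    have "\<bar>y t A - C\<bar> \<le> \<bar>M - m\<bar>" using ybd[OF t A] C_bd by auto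
    hence y: "(y t A - C)^2 \<le> (M - m)^2" by (simp only: abs_le_square_iff)
    have "p t st A * vv t st A = ahb_q K st A / p t st A * (y t A - C)^2"
      unfolding vv_eq[OF A] zz_def using pp by (simp add: field_simps power2_eq_square)
    also have "\<dots> \<le> 2 * (M - m)^2"
    proof (rule mult_mono)
      show "ahb_q K st A / p t st A \<le> 2" using q_le_2p[OF t] pp by (simp add: divide_le_eq)
    qed (use y in auto)
    finally show "p t st A * vv t st A \<le> 2 * (M - m)^2" .
  qed
  thus ?thesis by simp
qed

lemma E_gq: assumes t: "t \<ge> 1" shows "(\<Sum>A=1..K. p t st A * gq t st A) = (\<Sum>a=1..K. ahb_q K st a * y t a)"
proof -
  have "(\<Sum>A=1..K. p t st A * gq t st A) = (\<Sum>A=1..K. C * p t st A + ahb_q K st A * (y t A - C))"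
  proof (intro sum.cong refl)
    fix A assume A: "A \<in> {1..K}"
    have pp: "p t st A > 0" using p_pos t by auto
    show "p t st A * gq t st A = C * p t st A + ahb_q K st A * (y t A - C)"
      unfolding gq_eq[OF A] zz_def using pp by (simp add: field_simps)
  qed
  also have "\<dots> = (\<Sum>A=1..K. C * p t st A + ahb_q K st A * y t A - C * ahb_q K st A)"
    by (intro sum.cong) (auto simp: algebra_simps)
  also have "\<dots> = C * (\<Sum>A=1..K. p t st A) + (\<Sum>A=1..K. ahb_q K st A * y t A) - C * (\<Sum>A=1..K. ahb_q K st A)"
    by (simp only: sum.distrib sum_distrib_left sum_subtractf)
  also have "\<dots> = (\<Sum>a=1..K. ahb_q K st a * y t a)" unfolding p_sum[OF t] q_sum[OF K1] by simp
  finally show ?thesis .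
qed

lemma unbiased: assumes t: "t \<ge> 1" and a: "a \<in> {1..K}"
  shows "(\<Sum>A=1..K. p t st A * yh t st A a) = y t a"
proof -
  have "(\<Sum>A=1..K. p t st A * yh t st A a) = (\<Sum>A=1..K. (if A = a then p t st a * zz t st a else 0) + C * p t st A)"
    unfolding yh_eq by (intro sum.cong) (auto simp: algebra_simps)
  also have "\<dots> = p t st a * zz t st a + C * (\<Sum>A=1..K. p t st A)"
    using a by (simp add: sum.distrib sum_distrib_left)
  also have "\<dots> = y t a"
    unfolding p_sum[OF t] zz_def using p_pos[OF t, of st a] by simp
  finally show ?thesis .
qed

lemma qy_le: assumes t: "t \<ge> 1"
  shows "(\<Sum>a=1..K. ahb_q K st a * y t a) \<le> (\<Sum>a=1..K. p t st a * y t a) + \<gamma> t * (M - m)"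
proof -
  let ?Q = "(\<Sum>a=1..K. ahb_q K st a * y t a)"
  let ?U = "(\<Sum>a=1..K. y t a) / real K"
  have "(\<Sum>a=1..K. p t st a * y t a) = (\<Sum>a=1..K. (1 - \<gamma> t) * (ahb_q K st a * y t a) + \<gamma> t * (y t a / real K))"
    unfolding ahb_p_def by (intro sum.cong) (auto simp: algebra_simps)
  also have "\<dots> = (1 - \<gamma> t) * ?Q + \<gamma> t * ?U"
    by (simp only: sum.distrib sum_distrib_left sum_divide_distrib)
  finally have "(\<Sum>a=1..K. p t st a * y t a) = (1 - \<gamma> t) * ?Q + \<gamma> t * ?U" .
  moreover have "?Q \<le> M"
  proof -
    have "?Q \<le> (\<Sum>a=1..K. ahb_q K st a * M)"
      using ybd[OF t] by (intro sum_mono mult_left_mono) (auto simp: q_nonneg)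
    thus ?thesis by (simp only: sum_distrib_right[symmetric] q_sum[OF K1] mult_1)
  qed
  moreover have "?U \<ge> m"
  proof -
    have "(\<Sum>a=1..K. m) \<le> (\<Sum>a=1..K. y t a)" using ybd[OF t] by (intro sum_mono) auto
    thus ?thesis using K2 by (simp add: le_divide_eq mult.commute)
  qed
  moreover have "\<gamma> t \<ge> 0" using gam[OF t] g0 by linarith
  ultimately show ?thesis
  proof -
    assume a1: "(\<Sum>a=1..K. p t st a * y t a) = (1 - \<gamma> t) * ?Q + \<gamma> t * ?U" and a2: "?Q \<le> M" and a3: "?U \<ge> m" and a4: "\<gamma> t \<ge> 0"
    have "\<gamma> t * (?Q - ?U) \<le> \<gamma> t * (M - m)" using a2 a3 a4 by (intro mult_left_mono) auto
    moreover have "?Q = (1 - \<gamma> t) * ?Q + \<gamma> t * ?U + \<gamma> t * (?Q - ?U)" by (simp add: algebra_simps)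
    ultimately show ?thesis using a1 by linarith
  qed
qed

lemma delta_facts:
  assumes t: "t \<ge> 1" and A: "A \<in> {1..K}" and D0: "snd st \<ge> 0"
  defines "\<delta> \<equiv> ahb_delta K st (yh t st A)"
  shows "0 \<le> \<delta>" "\<delta> \<le> S" "snd st > 0 \<Longrightarrow> \<delta> * (snd st / ln (real K) - S/3) \<le> vv t st A / 2"
    "snd st > 0 \<Longrightarrow> \<delta> = ln (\<Sum>a=1..K. ahb_q K st a * exp (ahb_eta K (snd st) * yh t st A a)) / ahb_eta K (snd st) - gq t st A"
    "snd st = 0 \<Longrightarrow> \<delta> = Max (yh t st A ` {1..K}) - gq t st A"
proof -
  have le: "\<And>a. a \<in> {1..K} \<Longrightarrow> yh t st A a \<le> gq t st A + S" using yh_le[OF t A] by blast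
  show d0: "snd st = 0 \<Longrightarrow> \<delta> = Max (yh t st A ` {1..K}) - gq t st A"
    unfolding \<delta>_def ahb_delta_def gq_def Let_def by simp
  show d1: "snd st > 0 \<Longrightarrow> \<delta> = ln (\<Sum>a=1..K. ahb_q K st a * exp (ahb_eta K (snd st) * yh t st A a)) / ahb_eta K (snd st) - gq t st A"
    unfolding \<delta>_def ahb_delta_def gq_def Let_def by simp
  have "0 \<le> \<delta> \<and> \<delta> \<le> S"
  proof (cases "snd st = 0")
    case True
    obtain b where b: "b \<in> {1..K}" "Max (yh t st A ` {1..K}) = yh t st A b"
      using Max_obtain K1 by metis
    have "gq t st A \<le> (\<Sum>a=1..K. ahb_q K st a * Max (yh t st A ` {1..K}))"
      unfolding gq_def by (intro sum_mono mult_left_mono Max_ge'[OF K1]) (auto simp: q_nonneg)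
    also have "\<dots> = Max (yh t st A ` {1..K})" by (simp only: sum_distrib_right[symmetric] q_sum[OF K1] mult_1)
    finally show ?thesis using d0[OF True] b le[OF b(1)] by simp
  next
    case False
    hence pos: "snd st > 0" using D0 by simp
    have e: "ahb_eta K (snd st) > 0" using eta_pos[OF K2 pos] .
    have "0 \<le> ln (\<Sum>a\<in>{1..K}. ahb_q K st a * exp (ahb_eta K (snd st) * yh t st A a)) / ahb_eta K (snd st) - (\<Sum>a\<in>{1..K}. ahb_q K st a * yh t st A a)"
         "ln (\<Sum>a\<in>{1..K}. ahb_q K st a * exp (ahb_eta K (snd st) * yh t st A a)) / ahb_eta K (snd st) - (\<Sum>a\<in>{1..K}. ahb_q K st a * yh t st A a) \<le> S"
      using bern_step(1,2)[of "{1..K}" "ahb_q K st" "ahb_eta K (snd st)" "yh t st A" S] q_nonneg q_sum[OF K1] e le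
      unfolding gq_def by auto
    thus ?thesis using d1[OF pos] unfolding gq_def by simp
  qed
  thus "0 \<le> \<delta>" "\<delta> \<le> S" by auto
  show "snd st > 0 \<Longrightarrow> \<delta> * (snd st / ln (real K) - S/3) \<le> vv t st A / 2"
  proof -
    assume pos: "snd st > 0"
    have e: "ahb_eta K (snd st) > 0" using eta_pos[OF K2 pos] .
    have "(ln (\<Sum>a\<in>{1..K}. ahb_q K st a * exp (ahb_eta K (snd st) * yh t st A a)) / ahb_eta K (snd st) - (\<Sum>a\<in>{1..K}. ahb_q K st a * yh t st A a))
       * (1 / ahb_eta K (snd st) - S/3) \<le> (\<Sum>a\<in>{1..K}. ahb_q K st a * (yh t st A a - (\<Sum>a\<in>{1..K}. ahb_q K st a * yh t st A a))^2) / 2"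
      using bern_step(3)[of "{1..K}" "ahb_q K st" "ahb_eta K (snd st)" "yh t st A" S] q_nonneg q_sum[OF K1] e le
      unfolding gq_def by auto
    hence "\<delta> * (1 / ahb_eta K (snd st) - S/3) \<le> (\<Sum>a=1..K. ahb_q K st a * (yh t st A a - gq t st A)^2) / 2"
      using d1[OF pos] unfolding gq_def by simp
    also have "\<dots> \<le> vv t st A / 2" using var_le[OF A] by simp
    finally show ?thesis unfolding ahb_eta_def by simp
  qed
qed

end

fun EG :: "nat \<Rightarrow> (nat \<Rightarrow> real) \<Rightarrow> (nat \<Rightarrow> nat \<Rightarrow> real) \<Rightarrow> (nat \<Rightarrow> (nat\<Rightarrow>real)\<times>real \<Rightarrow> nat \<Rightarrow> real)
    \<Rightarrow> nat \<Rightarrow> nat \<Rightarrow> (nat\<Rightarrow>real)\<times>real \<Rightarrow> real \<Rightarrow> ((nat\<Rightarrow>real)\<times>real \<Rightarrow> real \<Rightarrow> real) \<Rightarrow> real" where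
  "EG K \<gamma> y g 0 t st z f = f st z"
| "EG K \<gamma> y g (Suc n) t st z f =
     (\<Sum>a=1..K. ahb_p K \<gamma> t st a * EG K \<gamma> y g n (Suc t) (ahb_update K \<gamma> y t st a) (z + g t st a) f)"

lemma wsq: fixes p s :: "nat \<Rightarrow> real"
  assumes "finite I" "\<And>a. a \<in> I \<Longrightarrow> p a \<ge> 0" "sum p I = 1"
  shows "(\<Sum>a\<in>I. p a * s a)^2 \<le> (\<Sum>a\<in>I. p a * (s a)^2)"
proof -
  define \<mu> where "\<mu> = (\<Sum>a\<in>I. p a * s a)"
  have "0 \<le> (\<Sum>a\<in>I. p a * (s a - \<mu>)^2)" using assms by (intro sum_nonneg) auto
  also have "\<dots> = (\<Sum>a\<in>I. p a * (s a)^2 - 2 * \<mu> * (p a * s a) + \<mu>^2 * p a)"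
    by (intro sum.cong) (auto simp: power2_eq_square algebra_simps)
  also have "\<dots> = (\<Sum>a\<in>I. p a * (s a)^2) - 2 * \<mu> * \<mu> + \<mu>^2 * sum p I"
    unfolding \<mu>_def by (simp only: sum.distrib sum_subtractf sum_distrib_left)
  also have "\<dots> = (\<Sum>a\<in>I. p a * (s a)^2) - \<mu>^2" using assms(3) by (simp add: power2_eq_square)
  finally show ?thesis unfolding \<mu>_def by simp
qed

context ahbs begin

abbreviation "upd \<equiv> ahb_update K \<gamma> y"

lemma EG_const: "t \<ge> 1 \<Longrightarrow> EG K \<gamma> y g n t st z (\<lambda>_ _. c) = c"
proof (induction n arbitrary: t st z)
  case 0 thus ?case by simp
next
  case (Suc n)
  have "EG K \<gamma> y g (Suc n) t st z (\<lambda>_ _. c) = (\<Sum>a=1..K. p t st a * c)" using Suc by simp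
  also have "\<dots> = c" using p_sum[OF Suc.prems] by (simp add: sum_distrib_right[symmetric])
  finally show ?case .
qed

lemma EG_add: "EG K \<gamma> y g n t st z (\<lambda>s w. f1 s w + f2 s w) = EG K \<gamma> y g n t st z f1 + EG K \<gamma> y g n t st z f2"
  by (induction n arbitrary: t st z) (simp_all add: distrib_left sum.distrib)

lemma EG_cmult: "EG K \<gamma> y g n t st z (\<lambda>s w. c * f s w) = c * EG K \<gamma> y g n t st z f"
  by (induction n arbitrary: t st z) (simp_all add: sum_distrib_left algebra_simps)

lemma EG_indep0: "EG K \<gamma> y g n t st z (\<lambda>s w. F s) = EG K \<gamma> y (\<lambda>_ _ _. 0) n t st 0 (\<lambda>s w. F s)"
  by (induction n arbitrary: t st z) simp_all

lemma EG_indep: "EG K \<gamma> y g n t st z (\<lambda>s w. F s) = EG K \<gamma> y g' n t st z' (\<lambda>s w. F s)"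
  using EG_indep0[of g n t st z F] EG_indep0[of g' n t st z' F] by simp

lemma EG_mono_inv:
  assumes "t \<ge> 1" "Inv st z"
    and pres: "\<And>s st z a. s \<ge> 1 \<Longrightarrow> Inv st z \<Longrightarrow> a \<in> {1..K} \<Longrightarrow> Inv (upd s st a) (z + g s st a)"
    and le: "\<And>st z. Inv st z \<Longrightarrow> f1 st z \<le> f2 st z"
  shows "EG K \<gamma> y g n t st z f1 \<le> EG K \<gamma> y g n t st z f2"
  using assms(1,2)
proof (induction n arbitrary: t st z)
  case 0 thus ?case using le by simp
next
  case (Suc n)
  show ?case unfolding EG.simps
  proof (intro sum_mono mult_left_mono)
    fix a assume a: "a \<in> {1..K}"
    show "0 \<le> p t st a" using p_nonneg Suc.prems by auto
    show "EG K \<gamma> y g n (Suc t) (upd t st a) (z + g t st a) f1 \<le> EG K \<gamma> y g n (Suc t) (upd t st a) (z + g t st a) f2"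
      using Suc.IH pres Suc.prems a by auto
  qed
qed

lemma EG_mono:
  assumes "t \<ge> 1" "\<And>st z. f1 st z \<le> f2 st z"
  shows "EG K \<gamma> y g n t st z f1 \<le> EG K \<gamma> y g n t st z f2"
  using EG_mono_inv[of t "\<lambda>_ _. True" st z g f1 f2 n] assms by auto

lemma EG_sqrt:
  assumes "t \<ge> 1" "\<And>st z. f st z \<ge> 0"
  shows "EG K \<gamma> y g n t st z (\<lambda>s w. sqrt (f s w)) \<le> sqrt (EG K \<gamma> y g n t st z f)"
  using assms(1)
proof (induction n arbitrary: t st z)
  case 0 thus ?case by simp
next
  case (Suc n)
  let ?E = "\<lambda>a. EG K \<gamma> y g n (Suc t) (upd t st a) (z + g t st a) f"
  have E0: "?E a \<ge> 0" for a using EG_mono[of "Suc t" "\<lambda>_ _. 0" f] EG_const assms(2) by (metis le_SucI Suc.prems order.refl le_Suc_eq)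
  have "EG K \<gamma> y g (Suc n) t st z (\<lambda>s w. sqrt (f s w)) \<le> (\<Sum>a=1..K. p t st a * sqrt (?E a))"
    unfolding EG.simps
  proof (intro sum_mono mult_left_mono)
    fix a assume "a \<in> {1..K}"
    show "0 \<le> p t st a" using p_nonneg Suc.prems by auto
    show "EG K \<gamma> y g n (Suc t) (upd t st a) (z + g t st a) (\<lambda>s w. sqrt (f s w)) \<le> sqrt (?E a)"
      using Suc.IH Suc.prems by auto
  qed
  also have "\<dots> \<le> sqrt (\<Sum>a=1..K. p t st a * (sqrt (?E a))^2)"
    using wsq[of "{1..K}" "p t st" "\<lambda>a. sqrt (?E a)"] p_nonneg Suc.prems p_sum
    by (intro real_le_rsqrt) auto
  also have "\<dots> = sqrt (EG K \<gamma> y g (Suc n) t st z f)" using E0 by simp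
  finally show ?case .
qed

lemma EG_acc:
  assumes "t \<ge> 1" "\<And>s st. s \<ge> 1 \<Longrightarrow> (\<Sum>a=1..K. p s st a * g s st a) \<le> c"
  shows "EG K \<gamma> y g n t st z (\<lambda>_ w. w) \<le> z + real n * c"
  using assms(1)
proof (induction n arbitrary: t st z)
  case 0 thus ?case by simp
next
  case (Suc n)
  have "EG K \<gamma> y g (Suc n) t st z (\<lambda>_ w. w) \<le> (\<Sum>a=1..K. p t st a * (z + g t st a + real n * c))"
    unfolding EG.simps
  proof (intro sum_mono mult_left_mono)
    fix a assume "a \<in> {1..K}"
    show "0 \<le> p t st a" using p_nonneg Suc.prems by auto
    show "EG K \<gamma> y g n (Suc t) (upd t st a) (z + g t st a) (\<lambda>_ w. w) \<le> z + g t st a + real n * c"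
      using Suc.IH Suc.prems by auto
  qed
  also have "\<dots> = z * (\<Sum>a=1..K. p t st a) + (\<Sum>a=1..K. p t st a * g t st a) + real n * c * (\<Sum>a=1..K. p t st a)"
    by (simp add: distrib_left sum.distrib sum_distrib_left sum_distrib_right algebra_simps)
  also have "\<dots> \<le> z + c + real n * c" using p_sum[OF Suc.prems] assms(2)[OF Suc.prems] by simp
  finally show ?case by (simp add: algebra_simps)
qed

lemma EG_L:
  assumes "t \<ge> 1" "a \<in> {1..K}"
  shows "EG K \<gamma> y g n t st z (\<lambda>s w. fst s a) = fst st a + (\<Sum>s\<in>{t..<t+n}. y s a)"
  using assms(1)
proof (induction n arbitrary: t st z)
  case 0 thus ?case by simp
next
  case (Suc n)
  have "EG K \<gamma> y g (Suc n) t st z (\<lambda>s w. fst s a) = (\<Sum>A=1..K. p t st A * (fst st a + yh t st A a + (\<Sum>s\<in>{Suc t..<Suc t+n}. y s a)))"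
    using Suc by (simp add: ahb_update_def Let_def)
  also have "\<dots> = (fst st a + (\<Sum>s\<in>{Suc t..<Suc t+n}. y s a)) * (\<Sum>A=1..K. p t st A) + (\<Sum>A=1..K. p t st A * yh t st A a)"
    by (simp add: distrib_left sum.distrib sum_distrib_left sum_distrib_right algebra_simps)
  also have "\<dots> = fst st a + (\<Sum>s\<in>{Suc t..<Suc t+n}. y s a) + y t a"
    using p_sum[OF Suc.prems] unbiased[OF Suc.prems assms(2)] by simp
  also have "\<dots> = fst st a + (\<Sum>s\<in>{t..<t+Suc n}. y s a)"
    by (simp add: sum.atLeast_Suc_lessThan)
  finally show ?case .
qed

lemma EG_Q:
  assumes "t \<ge> 1"
  shows "EG K \<gamma> y gq n t st z (\<lambda>_ w. w) \<le> z + ahb_exp_reward K \<gamma> y n t st + (M - m) * (\<Sum>s\<in>{t..<t+n}. \<gamma> s)"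
  using assms(1)
proof (induction n arbitrary: t st z)
  case 0 thus ?case by simp
next
  case (Suc n)
  let ?G = "(M - m) * (\<Sum>s\<in>{Suc t..<Suc t+n}. \<gamma> s)"
  let ?R = "\<lambda>a. ahb_exp_reward K \<gamma> y n (Suc t) (upd t st a)"
  have "EG K \<gamma> y gq (Suc n) t st z (\<lambda>_ w. w) \<le> (\<Sum>a=1..K. p t st a * (z + gq t st a + ?R a + ?G))"
    unfolding EG.simps
  proof (intro sum_mono mult_left_mono)
    fix a assume "a \<in> {1..K}"
    show "0 \<le> p t st a" using p_nonneg Suc.prems by auto
    have "1 \<le> Suc t" by simp
    from Suc.IH[OF this, of "upd t st a" "z + gq t st a"]
    show "EG K \<gamma> y gq n (Suc t) (upd t st a) (z + gq t st a) (\<lambda>_ w. w) \<le> z + gq t st a + ?R a + ?G" .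
  qed
  also have "\<dots> = (\<Sum>a=1..K. (z + ?G) * p t st a + p t st a * gq t st a + p t st a * ?R a)"
    by (intro sum.cong) (auto simp: algebra_simps)
  also have "\<dots> = (z + ?G) * (\<Sum>a=1..K. p t st a) + (\<Sum>a=1..K. p t st a * gq t st a) + (\<Sum>a=1..K. p t st a * ?R a)"
    by (simp only: sum.distrib sum_distrib_left)
  also have "\<dots> \<le> z + ?G + ((\<Sum>a=1..K. p t st a * y t a) + \<gamma> t * (M - m)) + (\<Sum>a=1..K. p t st a * ?R a)"
    using p_sum[OF Suc.prems] E_gq[OF Suc.prems] qy_le[OF Suc.prems] by simp
  also have "\<dots> = z + ahb_exp_reward K \<gamma> y (Suc n) t st + (M - m) * (\<gamma> t + (\<Sum>s\<in>{Suc t..<Suc t+n}. \<gamma> s))"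
    by (simp add: distrib_left sum.distrib algebra_simps)
  also have "\<gamma> t + (\<Sum>s\<in>{Suc t..<Suc t+n}. \<gamma> s) = (\<Sum>s\<in>{t..<t+Suc n}. \<gamma> s)"
    by (simp add: sum.atLeast_Suc_lessThan)
  finally show ?case .
qed

end

context ahbs begin

definition "cc = 2/3 * ln (real K) + 1"

definition "InvR st Q \<longleftrightarrow> snd st \<ge> 0 \<and> Phi K (snd st) (fst st) - snd st \<le> Q"
definition "InvV st V \<longleftrightarrow> snd st \<ge> 0 \<and> V \<ge> 0 \<and> (snd st)^2 \<le> ln (real K) * V + cc * S * snd st"

lemma upd_eq: "upd s st A = (\<lambda>a. fst st a + yh s st A a, snd st + ahb_delta K st (yh s st A))"
  unfolding ahb_update_def Let_def by simp

lemma lnK': "ln (real K) > 0" using lnK[OF K2] .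

lemma Max_add_le: "Max ((\<lambda>a. (L a::real) + x a) ` {1..K}) \<le> Max (L ` {1..K}) + Max (x ` {1..K})"
proof -
  obtain b where b: "b \<in> {1..K}" "Max ((\<lambda>a. L a + x a) ` {1..K}) = L b + x b"
    using Max_obtain[OF K1, of "\<lambda>a. L a + x a"] by metis
  have h1: "L b \<le> Max (L ` {1..K})" by (rule Max_ge'[OF K1 b(1)])
  have h2: "x b \<le> Max (x ` {1..K})" by (rule Max_ge'[OF K1 b(1)])
  show ?thesis using b(2) h1 h2 by linarith
qed

lemma InvR_pres:
  assumes s: "s \<ge> 1" and I: "InvR st Q" and A: "A \<in> {1..K}"
  shows "InvR (upd s st A) (Q + gq s st A)"
proof -
  obtain L D where st: "st = (L, D)" by (cases st)
  let ?x = "yh s st A"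
  let ?\<delta> = "ahb_delta K st ?x"
  let ?L' = "\<lambda>a. L a + ?x a"
  have D0: "D \<ge> 0" and IQ: "Phi K D L - D \<le> Q" using I st unfolding InvR_def by auto
  have dn: "0 \<le> ?\<delta>" using delta_facts(1)[OF s A] D0 st by simp
  have u: "upd s st A = (?L', D + ?\<delta>)" using upd_eq st by simp
  have "Phi K (D + ?\<delta>) ?L' - (D + ?\<delta>) \<le> Q + gq s st A"
  proof (cases "D = 0")
    case True
    have dd: "?\<delta> = Max (?x ` {1..K}) - gq s st A" using delta_facts(5)[OF s A] True st by simp
    have P0: "Phi K D L = Max (L ` {1..K})" using True unfolding Phi_def by simp
    have "Phi K (D + ?\<delta>) ?L' \<le> Max (?L' ` {1..K})"
    proof (cases "D + ?\<delta> = 0")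
      case True thus ?thesis unfolding Phi_def by simp
    next
      case False thus ?thesis using phi_le_max[OF K2, of "D + ?\<delta>" ?L'] dn D0 by simp
    qed
    also have "\<dots> \<le> Max (L ` {1..K}) + Max (?x ` {1..K})" by (rule Max_add_le)
    finally show ?thesis using IQ P0 dd True by simp
  next
    case False
    hence Dp: "D > 0" using D0 by simp
    have dd: "?\<delta> = ln (\<Sum>a=1..K. ahb_q K st a * exp (ahb_eta K D * ?x a)) / ahb_eta K D - gq s st A"
      using delta_facts(4)[OF s A] Dp st by simp
    have "Phi K D ?L' = Phi K D L + ln (\<Sum>a=1..K. ahb_q K (L, D) a * exp (ahb_eta K D * ?x a)) / ahb_eta K D"
      by (rule phi_shift[OF K2 Dp])
    hence sh: "Phi K D ?L' = Phi K D L + ?\<delta> + gq s st A" using dd st by simp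
    have "Phi K (D + ?\<delta>) ?L' \<le> Phi K D ?L'" using phi_anti[OF K2 Dp, of "D + ?\<delta>"] dn by simp
    thus ?thesis using sh IQ by simp
  qed
  thus ?thesis unfolding InvR_def u using D0 dn by simp
qed

lemma InvR_final: "InvR st Q \<Longrightarrow> Max (fst st ` {1..K}) \<le> Q + 2 * snd st"
proof -
  assume I: "InvR st Q"
  have "Max (fst st ` {1..K}) \<le> Phi K (snd st) (fst st) + snd st"
  proof (cases "snd st = 0")
    case True thus ?thesis unfolding Phi_def by simp
  next
    case False thus ?thesis using phi_ge[OF K2, of "snd st" "fst st"] I unfolding InvR_def by simp
  qed
  thus ?thesis using I unfolding InvR_def by simp
qed

lemma InvV_pres:
  assumes s: "s \<ge> 1" and I: "InvV st V" and A: "A \<in> {1..K}"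
  shows "InvV (upd s st A) (V + vv s st A)"
proof -
  obtain L D where st: "st = (L, D)" by (cases st)
  let ?\<delta> = "ahb_delta K st (yh s st A)"
  let ?v = "vv s st A"
  have D0: "D \<ge> 0" and V0: "V \<ge> 0" and ID: "D^2 \<le> ln (real K) * V + cc * S * D"
    using I st unfolding InvV_def by auto
  have dn: "0 \<le> ?\<delta>" and dS: "?\<delta> \<le> S" using delta_facts(1,2)[OF s A] D0 st by auto
  have v0: "?v \<ge> 0" by (rule vv_nonneg)
  have u: "snd (upd s st A) = D + ?\<delta>" using upd_eq st by simp
  have sq: "?\<delta>^2 \<le> S * ?\<delta>" using dS dn by (simp add: power2_eq_square mult_right_mono)
  have key: "2 * D * ?\<delta> + ?\<delta>^2 \<le> ln (real K) * ?v + cc * S * ?\<delta>"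
  proof (cases "D = 0")
    case True
    have "S * ?\<delta> \<le> cc * S * ?\<delta>"
    proof -
      have "cc \<ge> 1" unfolding cc_def using lnK' by simp
      thus ?thesis using S_nonneg dn by (metis mult_le_cancel_right1 mult.assoc mult.commute mult_nonneg_nonneg order_refl mult_right_mono mult_left_mono mult_1)
    qed
    moreover have "ln (real K) * ?v \<ge> 0" using lnK' v0 by simp
    ultimately show ?thesis using True sq by simp
  next
    case False
    hence Dp: "D > 0" using D0 by simp
    have D0': "snd st \<ge> 0" and Dp': "snd st > 0" using Dp st by auto
    have b: "?\<delta> * (D / ln (real K) - S/3) \<le> ?v / 2" using delta_facts(3)[OF s A D0' Dp'] st by simp
    have "2 * D * ?\<delta> = 2 * ln (real K) * (?\<delta> * (D / ln (real K) - S/3)) + 2/3 * ln (real K) * S * ?\<delta>"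
      using lnK' by (simp add: field_simps)
    also have "\<dots> \<le> 2 * ln (real K) * (?v / 2) + 2/3 * ln (real K) * S * ?\<delta>"
      using mult_left_mono[OF b, of "2 * ln (real K)"] lnK' by simp
    finally have "2 * D * ?\<delta> \<le> ln (real K) * ?v + 2/3 * ln (real K) * S * ?\<delta>" by simp
    thus ?thesis using sq unfolding cc_def by (simp add: algebra_simps)
  qed
  have "(D + ?\<delta>)^2 = D^2 + (2 * D * ?\<delta> + ?\<delta>^2)" by (simp add: power2_eq_square algebra_simps)
  also have "\<dots> \<le> ln (real K) * V + cc * S * D + (ln (real K) * ?v + cc * S * ?\<delta>)" using ID key by linarith
  also have "\<dots> = ln (real K) * (V + ?v) + cc * S * (D + ?\<delta>)" by (simp add: algebra_simps)
  finally show ?thesis unfolding InvV_def u using D0 dn V0 v0 by simp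
qed

lemma quad_bound: fixes D a V b :: real
  assumes "D \<ge> 0" "b \<ge> 0" "a * V \<ge> 0" "D^2 \<le> a * V + b * D"
  shows "D \<le> sqrt (a * V) + b"
proof (cases "D \<le> b")
  case True thus ?thesis using assms by (smt (verit) real_sqrt_ge_zero)
next
  case False
  have "(D - b)^2 \<le> D * (D - b)" using False assms by (simp add: power2_eq_square mult_right_mono)
  also have "\<dots> \<le> a * V" using assms by (simp add: power2_eq_square algebra_simps)
  finally have "D - b \<le> sqrt (a * V)" using False by (simp add: real_le_rsqrt)
  thus ?thesis by simp
qed

lemma InvV_final: "InvV st V \<Longrightarrow> snd st \<le> sqrt (ln (real K) * max V 0) + cc * S"
proof -
  assume I: "InvV st V"
  have cS: "cc * S \<ge> 0" unfolding cc_def using lnK' S_nonneg by simp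
  have mV: "max V 0 = V" using I unfolding InvV_def by simp
  show ?thesis unfolding mV using quad_bound[of "snd st" "cc * S" "ln (real K)" V] I cS lnK' unfolding InvV_def
    by simp
qed

end

context ahbs begin

lemma main_bound:
  "Max ((\<lambda>a. \<Sum>s\<in>{Suc K..<Suc K+n}. y s a) ` {1..K})
     \<le> ahb_exp_reward K \<gamma> y n (Suc K) (\<lambda>_. 0, 0) + (M - m) * (\<Sum>s\<in>{Suc K..<Suc K+n}. \<gamma> s)
       + 2 * (sqrt (ln (real K) * (real n * (2 * real K * (M - m)^2))) + cc * S)"
proof -
  define st0 :: "(nat \<Rightarrow> real) \<times> real" where "st0 = (\<lambda>_. 0, 0)"
  define EQ where "EQ f = EG K \<gamma> y gq n (Suc K) st0 0 f" for f
  define EV where "EV f = EG K \<gamma> y vv n (Suc K) st0 0 f" for f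
  have t1: "Suc K \<ge> 1" by simp
  let ?R = "ahb_exp_reward K \<gamma> y n (Suc K) (\<lambda>_. 0, 0) + (M - m) * (\<Sum>s\<in>{Suc K..<Suc K+n}. \<gamma> s)"
  let ?B = "sqrt (ln (real K) * (real n * (2 * real K * (M - m)^2))) + cc * S"
  have Max0: "Max ((\<lambda>_. 0::real) ` {1..K}) = 0"
  proof -
    have "(\<lambda>_. 0::real) ` {1..K} = {0}" using K1 by auto
    thus ?thesis by simp
  qed
  have IR0: "InvR st0 0" unfolding InvR_def st0_def Phi_def using Max0 by simp
  have IV0: "InvV st0 0" unfolding InvV_def st0_def by simp
  have step1: "EQ (\<lambda>s w. Max (fst s ` {1..K})) \<le> EQ (\<lambda>s w. w + 2 * snd s)"
    unfolding EQ_def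
    by (rule EG_mono_inv[of _ InvR, OF t1 IR0]) (auto intro: InvR_pres dest: InvR_final)
  have step2: "EQ (\<lambda>s w. w + 2 * snd s) = EQ (\<lambda>_ w. w) + 2 * EQ (\<lambda>s w. snd s)"
    unfolding EQ_def using EG_add[of gq n "Suc K" st0 0 "\<lambda>s w. w" "\<lambda>s w. 2 * snd s"]
      EG_cmult[of gq n "Suc K" st0 0 2 "\<lambda>s w. snd s"] by simp
  have step3: "EQ (\<lambda>_ w. w) \<le> ?R"
    unfolding EQ_def using EG_Q[OF t1, of n st0 0] by (simp add: st0_def)
  have step4: "EQ (\<lambda>s w. snd s) = EV (\<lambda>s w. snd s)"
    unfolding EQ_def EV_def by (rule EG_indep)
  have step5: "EV (\<lambda>s w. snd s) \<le> EV (\<lambda>s w. sqrt (ln (real K) * max w 0) + cc * S)"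
    unfolding EV_def
    by (rule EG_mono_inv[of _ InvV, OF t1 IV0]) (auto intro: InvV_pres dest: InvV_final)
  have step6: "EV (\<lambda>s w. sqrt (ln (real K) * max w 0) + cc * S) = EV (\<lambda>s w. sqrt (ln (real K) * max w 0)) + cc * S"
    unfolding EV_def using EG_add[of vv n "Suc K" st0 0 "\<lambda>s w. sqrt (ln (real K) * max w 0)" "\<lambda>s w. cc * S"]
      EG_const[OF t1, of vv n st0 0 "cc * S"] by simp
  have step7: "EV (\<lambda>s w. sqrt (ln (real K) * max w 0)) \<le> sqrt (EV (\<lambda>s w. ln (real K) * max w 0))"
    unfolding EV_def by (rule EG_sqrt[OF t1]) (use lnK' in simp)
  have step8: "EV (\<lambda>s w. ln (real K) * max w 0) = ln (real K) * EV (\<lambda>s w. max w 0)"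
    unfolding EV_def by (rule EG_cmult)
  have step9: "EV (\<lambda>s w. max w 0) \<le> EV (\<lambda>_ w. w)"
    unfolding EV_def
    by (rule EG_mono_inv[of _ "\<lambda>st w. w \<ge> 0", OF t1]) (auto intro: vv_nonneg add_nonneg_nonneg)
  have step10: "EV (\<lambda>_ w. w) \<le> real n * (2 * real K * (M - m)^2)"
    unfolding EV_def using EG_acc[OF t1, of vv "2 * real K * (M - m)^2" n st0 0] E_vv by simp
  have "EV (\<lambda>s w. snd s) \<le> ?B"
  proof -
    have "ln (real K) * EV (\<lambda>s w. max w 0) \<le> ln (real K) * (real n * (2 * real K * (M - m)^2))"
      using step9 step10 lnK' by (intro mult_left_mono) auto
    hence "sqrt (EV (\<lambda>s w. ln (real K) * max w 0)) \<le> sqrt (ln (real K) * (real n * (2 * real K * (M - m)^2)))"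
      unfolding step8 by simp
    thus ?thesis using step5 step6 step7 by linarith
  qed
  hence "2 * EQ (\<lambda>s w. snd s) \<le> 2 * ?B" using step4 by simp
  hence EQB: "EQ (\<lambda>s w. Max (fst s ` {1..K})) \<le> ?R + 2 * ?B" using step1 step2 step3 by linarith
  show ?thesis
  proof (rule Max.boundedI)
    show "finite ((\<lambda>a. \<Sum>s\<in>{Suc K..<Suc K+n}. y s a) ` {1..K})" by simp
    show "(\<lambda>a. \<Sum>s\<in>{Suc K..<Suc K+n}. y s a) ` {1..K} \<noteq> {}" using K1 by auto
  next
    fix v assume "v \<in> (\<lambda>a. \<Sum>s\<in>{Suc K..<Suc K+n}. y s a) ` {1..K}"
    then obtain a where a: "a \<in> {1..K}" "v = (\<Sum>s\<in>{Suc K..<Suc K+n}. y s a)" by blast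
    have "v = EQ (\<lambda>s w. fst s a)" unfolding EQ_def using EG_L[OF t1 a(1), of gq n st0 0] a(2) by (simp add: st0_def)
    also have "\<dots> \<le> EQ (\<lambda>s w. Max (fst s ` {1..K}))"
      unfolding EQ_def by (rule EG_mono[OF t1]) (rule Max_ge'[OF K1 a(1)])
    finally show "v \<le> ?R + 2 * ?B" using EQB by simp
  qed
qed

end

context ahbs begin

lemma const_ineq: "real (K - 1) * (M - m) + 2 * (cc * S) \<le> 5 * (M - m) * real K * ln (real K) / g0"
proof -
  define L where "L = ln (real K)"
  define d where "d = M - m"
  have d0: "d \<ge> 0" using mM d_def by simp
  have g: "0 < g0" "g0 \<le> 1/2" using g0 gam[of 1] by auto
  have Kr: "real (K - 1) = real K - 1" using K2 by simp
  have key: "(real K - 1) / 2 + 2 * real K \<le> 11/3 * real K * L"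
  proof (cases "K = 2")
    case True
    have "L \<ge> 2/3" using ln2_ge_two_thirds True L_def by simp
    thus ?thesis using True by simp
  next
    case False
    hence K3: "K \<ge> 3" using K2 by simp
    have "(3::real) \<le> real K" using K3 by simp
    hence "exp 1 \<le> real K" using exp_le by linarith
    hence "ln (exp 1) \<le> ln (real K)" using K3 by (subst ln_le_cancel_iff) auto
    hence "1 \<le> L" unfolding L_def by simp
    hence h: "11/3 * real K * 1 \<le> 11/3 * real K * L" by (intro mult_left_mono) auto
    have "(real K - 1) / 2 + 2 * real K \<le> 11/3 * real K * 1" using K3 by simp
    thus ?thesis using h by linarith
  qed
  have "(real K - 1) * g0 \<le> (real K - 1) / 2" using g K2 by (simp add: mult_left_mono)
  moreover have "(4/3 * L + 2) * real K = 4/3 * (real K * L) + 2 * real K" by (simp add: algebra_simps)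
  moreover have "5 * real K * L = 5 * (real K * L)" by simp
  moreover have "11/3 * real K * L = 11/3 * (real K * L)" by simp
  ultimately have k2: "(real K - 1) * g0 + (4/3 * L + 2) * real K \<le> 5 * real K * L" using key by linarith
  have "real (K - 1) + 2 * (cc * (real K / g0)) \<le> 5 * real K * L / g0"
  proof -
    have "real (K - 1) + 2 * (cc * (real K / g0)) = ((real K - 1) * g0 + (4/3 * L + 2) * real K) / g0"
      unfolding Kr cc_def L_def using g by (simp add: field_simps)
    also have "\<dots> \<le> 5 * real K * L / g0" using k2 g by (simp add: divide_right_mono)
    finally show ?thesis .
  qed
  hence "d * (real (K - 1) + 2 * (cc * (real K / g0))) \<le> d * (5 * real K * L / g0)"
    using d0 by (intro mult_left_mono) auto
  thus ?thesis unfolding S_def d_def L_def by (simp add: algebra_simps)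
qed

lemma sqrt_ineq: assumes "n \<le> T"
  shows "2 * sqrt (ln (real K) * (real n * (2 * real K * (M - m)^2))) \<le> 3 * (M - m) * sqrt (real K * real T * ln (real K))"
proof -
  have l: "ln (real K) \<ge> 0" using lnK' by simp
  have s4: "sqrt 4 = (2::real)" by (rule real_sqrt_unique) auto
  have s9: "sqrt 9 = (3::real)" by (rule real_sqrt_unique) auto
  have "2 * sqrt (ln (real K) * (real n * (2 * real K * (M - m)^2))) = sqrt (4 * (ln (real K) * (real n * (2 * real K * (M - m)^2))))"
    by (simp only: real_sqrt_mult s4)
  also have "\<dots> \<le> sqrt (9 * (M - m)^2 * (real K * real T * ln (real K)))"
  proof (rule real_sqrt_le_mono)
    have "real n \<le> real T" using assms by simp
    hence "8 * real n \<le> 9 * real T" by simp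
    hence "(8 * real n) * (real K * ln (real K) * (M - m)^2) \<le> (9 * real T) * (real K * ln (real K) * (M - m)^2)"
      using l by (intro mult_right_mono) auto
    thus "4 * (ln (real K) * (real n * (2 * real K * (M - m)^2))) \<le> 9 * (M - m)^2 * (real K * real T * ln (real K))"
      by (simp add: algebra_simps)
  qed
  also have "\<dots> = 3 * (M - m) * sqrt (real K * real T * ln (real K))"
    using mM by (simp only: real_sqrt_mult s9 real_sqrt_abs)
  finally show ?thesis .
qed

lemma first_rounds: assumes "a \<in> {1..K}"
  shows "(\<Sum>t=1..K. y t a) \<le> (\<Sum>t=1..K. y t t) + real (K - 1) * (M - m)"
proof -
  have "(\<Sum>t=1..K. y t a - y t t) = (y a a - y a a) + (\<Sum>t\<in>{1..K} - {a}. y t a - y t t)"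
    using assms by (simp add: sum.remove)
  also have "\<dots> = (\<Sum>t\<in>{1..K} - {a}. y t a - y t t)" by simp
  also have "\<dots> \<le> (\<Sum>t\<in>{1..K} - {a}. M - m)"
  proof (rule sum_mono)
    fix t assume t: "t \<in> {1..K} - {a}"
    hence t1: "t \<ge> 1" "t \<in> {1..K}" by auto
    show "y t a - y t t \<le> M - m" using ybd[OF t1(1) assms] ybd[OF t1] by linarith
  qed
  also have "\<dots> = real (K - 1) * (M - m)" using assms by simp
  finally show ?thesis by (simp add: sum_subtractf)
qed

lemma regret_locale: assumes T: "T \<ge> 1"
  shows "ahb_regret K \<gamma> y T \<le> 3 * (M - m) * sqrt (real K * real T * ln (real K))
              + 5 * (M - m) * real K * ln (real K) / g0 + (M - m) * (\<Sum>t=K+1..T. \<gamma> t)"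
proof -
  have gs: "(\<Sum>t=K+1..T. \<gamma> t) \<ge> 0"
  proof (rule sum_nonneg)
    fix t assume "t \<in> {K+1..T}"
    hence "t \<ge> 1" by simp
    thus "\<gamma> t \<ge> 0" using gam g0 by (meson less_le_trans less_imp_le)
  qed
  have gs2: "(M - m) * (\<Sum>t=K+1..T. \<gamma> t) \<ge> 0" using gs mM by simp
  have dm: "M - m \<ge> 0" using mM by simp
  have t5: "5 * (M - m) * real K * ln (real K) / g0 \<ge> 0" using dm lnK' g0 by simp
  show ?thesis
  proof (cases "T \<le> K")
    case True
    have tot: "ahb_total K \<gamma> y T = (\<Sum>t=1..T. y t t)" unfolding ahb_total_def using True by simp
    have "Max ((\<lambda>a. \<Sum>t=1..T. y t a) ` {1..K}) \<le> (\<Sum>t=1..T. y t t) + real T * (M - m)"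
    proof (rule Max.boundedI)
      show "finite ((\<lambda>a. \<Sum>t=1..T. y t a) ` {1..K})" by simp
      show "(\<lambda>a. \<Sum>t=1..T. y t a) ` {1..K} \<noteq> {}" using K1 by auto
    next
      fix v assume "v \<in> (\<lambda>a. \<Sum>t=1..T. y t a) ` {1..K}"
      then obtain a where a: "a \<in> {1..K}" "v = (\<Sum>t=1..T. y t a)" by blast
      have "(\<Sum>t=1..T. y t a) \<le> (\<Sum>t=1..T. y t t + (M - m))"
      proof (intro sum_mono)
        fix t assume t: "t \<in> {1..T}"
        hence "t \<in> {1..K}" using True by auto
        thus "y t a \<le> y t t + (M - m)" using ybd[of t a] ybd[of t t] a t by auto
      qed
      thus "v \<le> (\<Sum>t=1..T. y t t) + real T * (M - m)" using a by (simp add: sum.distrib)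
    qed
    hence r: "ahb_regret K \<gamma> y T \<le> real T * (M - m)" unfolding ahb_regret_def tot by simp
    have "real T * (M - m) \<le> 3 * (M - m) * sqrt (real K * real T * ln (real K))"
    proof -
      have "ln (2::real) \<le> ln (real K)" using K2 by simp
      hence l: "ln (real K) \<ge> 2/3" using ln2_ge_two_thirds by linarith
      have "real T * real T \<le> real K * real T" using True by (intro mult_right_mono) auto
      also have "\<dots> = real K * real T * 1" by simp
      also have "\<dots> \<le> real K * real T * (9 * ln (real K))" using l by (intro mult_left_mono) auto
      finally have "real T * real T \<le> 9 * (real K * real T * ln (real K))" by (simp add: algebra_simps)
      hence "sqrt (real T * real T) \<le> sqrt (9 * (real K * real T * ln (real K)))" by (rule real_sqrt_le_mono)
      hence "real T \<le> 3 * sqrt (real K * real T * ln (real K))" by (simp add: real_sqrt_mult)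
      hence "real T * (M - m) \<le> (3 * sqrt (real K * real T * ln (real K))) * (M - m)"
        using dm by (intro mult_right_mono) auto
      thus ?thesis by (simp add: algebra_simps)
    qed
    thus ?thesis using r gs2 t5 by linarith
  next
    case False
    define n where "n = T - K"
    have Tn: "T = K + n" using False n_def by simp
    have tot: "ahb_total K \<gamma> y T = (\<Sum>t=1..K. y t t) + ahb_exp_reward K \<gamma> y n (Suc K) (\<lambda>_. 0, 0)"
      unfolding ahb_total_def n_def using False by simp
    have set: "{Suc K..<Suc K + n} = {K+1..T}" using Tn by auto
    have "Max ((\<lambda>a. \<Sum>t=1..T. y t a) ` {1..K}) \<le> (\<Sum>t=1..K. y t t) + real (K - 1) * (M - m)
        + Max ((\<lambda>a. \<Sum>s\<in>{Suc K..<Suc K+n}. y s a) ` {1..K})"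
    proof (rule Max.boundedI)
      show "finite ((\<lambda>a. \<Sum>t=1..T. y t a) ` {1..K})" by simp
      show "(\<lambda>a. \<Sum>t=1..T. y t a) ` {1..K} \<noteq> {}" using K1 by auto
    next
      fix v assume "v \<in> (\<lambda>a. \<Sum>t=1..T. y t a) ` {1..K}"
      then obtain a where a: "a \<in> {1..K}" "v = (\<Sum>t=1..T. y t a)" by blast
      have split: "(\<Sum>t=1..T. y t a) = (\<Sum>t=1..K. y t a) + (\<Sum>s\<in>{Suc K..<Suc K+n}. y s a)"
      proof -
        have e: "{1..T} = {1..K} \<union> {Suc K..<Suc K+n}" using Tn by auto
        show ?thesis unfolding e by (rule sum.union_disjoint) auto
      qed
      have "(\<Sum>s\<in>{Suc K..<Suc K+n}. y s a) \<le> Max ((\<lambda>a. \<Sum>s\<in>{Suc K..<Suc K+n}. y s a) ` {1..K})"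
        by (rule Max_ge'[OF K1 a(1)])
      thus "v \<le> (\<Sum>t=1..K. y t t) + real (K - 1) * (M - m) + Max ((\<lambda>a. \<Sum>s\<in>{Suc K..<Suc K+n}. y s a) ` {1..K})"
        using a split first_rounds[OF a(1)] by linarith
    qed
    hence "ahb_regret K \<gamma> y T \<le> real (K - 1) * (M - m) + (M - m) * (\<Sum>s\<in>{Suc K..<Suc K+n}. \<gamma> s)
         + 2 * (sqrt (ln (real K) * (real n * (2 * real K * (M - m)^2))) + cc * S)"
      unfolding ahb_regret_def tot using main_bound[of n] by linarith
    hence "ahb_regret K \<gamma> y T \<le> real (K - 1) * (M - m) + (M - m) * (\<Sum>t=K+1..T. \<gamma> t)
         + 2 * (sqrt (ln (real K) * (real n * (2 * real K * (M - m)^2))) + cc * S)"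
      unfolding set .
    moreover have "2 * sqrt (ln (real K) * (real n * (2 * real K * (M - m)^2))) \<le> 3 * (M - m) * sqrt (real K * real T * ln (real K))"
      using sqrt_ineq[of n T] Tn by (simp only: le_add2)
    moreover have "2 * (sqrt (ln (real K) * (real n * (2 * real K * (M - m)^2))) + cc * S) = 2 * sqrt (ln (real K) * (real n * (2 * real K * (M - m)^2))) + 2 * (cc * S)"
      by (simp only: distrib_left)
    ultimately show ?thesis using const_ineq by linarith
  qed
qed

end

lemma ER_cong:
  "(\<And>s. t \<le> s \<Longrightarrow> s < t + n \<Longrightarrow> \<gamma> s = \<gamma>' s) \<Longrightarrow>
   ahb_exp_reward K \<gamma> y n t st = ahb_exp_reward K \<gamma>' y n t st"
proof (induction n arbitrary: t st)
  case 0 show ?case by simp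
next
  case (Suc n)
  have g: "\<gamma> t = \<gamma>' t" using Suc.prems by simp
  have p: "ahb_p K \<gamma> t st a = ahb_p K \<gamma>' t st a" for a unfolding ahb_p_def g by (rule refl)
  have u: "ahb_update K \<gamma> y t st a = ahb_update K \<gamma>' y t st a" for a
    unfolding ahb_update_def ahb_yhat_def ahb_p_def g by (rule refl)
  have IH: "ahb_exp_reward K \<gamma> y n (Suc t) st' = ahb_exp_reward K \<gamma>' y n (Suc t) st'" for st'
    using Suc.IH Suc.prems by auto
  show ?case by (simp only: ahb_exp_reward.simps p u IH)
qed

lemma gamma_anti:
  assumes "\<forall>t\<ge>1. \<gamma> (Suc t) \<le> (\<gamma> t :: real)" "1 \<le> t"
  shows "\<gamma> (t + d) \<le> \<gamma> t"
proof (induction d)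
  case 0 show ?case by simp
next
  case (Suc d)
  have "\<gamma> (Suc (t + d)) \<le> \<gamma> (t + d)" using assms by simp
  thus ?case using Suc by simp
qed

lemma part1:
  fixes K :: nat
  assumes K2: "K \<ge> 2"
    and H1: "\<forall>t\<ge>1. \<gamma> (Suc t) \<le> \<gamma> t" and H2: "\<forall>t\<ge>1. 0 \<le> \<gamma> t \<and> \<gamma> t \<le> 1/2"
    and mM: "m < M" and yb: "\<forall>t\<ge>1. \<forall>a\<in>{1..K}. m \<le> y t a \<and> y t a \<le> M" and T: "T \<ge> 1" and gT: "\<gamma> T > 0"
  shows "ahb_regret K \<gamma> y T
            \<le> 3 * (M - m) * sqrt (real K * real T * ln (real K))
              + 5 * (M - m) * real K * ln (real K) / \<gamma> T
              + (M - m) * (\<Sum>t=K+1..T. \<gamma> t)"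
proof -
  define \<gamma>' where "\<gamma>' t = (if t \<le> T then \<gamma> t else \<gamma> T)" for t
  have ge: "\<gamma> T \<le> \<gamma> t" if "1 \<le> t" "t \<le> T" for t
    using gamma_anti[OF H1 that(1), of "T - t"] that by simp
  interpret ahbs K \<gamma>' y m M "\<gamma> T"
  proof
    show "2 \<le> K" by (rule K2)
    show "0 < \<gamma> T" by (rule gT)
    show "\<gamma> T \<le> \<gamma>' t \<and> \<gamma>' t \<le> 1 / 2" if "1 \<le> t" for t
      using ge[OF that] H2 that T unfolding \<gamma>'_def by auto
    show "m \<le> y t a \<and> y t a \<le> M" if "1 \<le> t" "a \<in> {1..K}" for t a using yb that by auto
  qed
  have c: "\<gamma> s = \<gamma>' s" if "Suc K \<le> s" "s < Suc K + (T - K)" for s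
    using that unfolding \<gamma>'_def by auto
  have eqR: "ahb_regret K \<gamma> y T = ahb_regret K \<gamma>' y T"
  proof -
    have e: "ahb_exp_reward K \<gamma> y (T - K) (Suc K) (\<lambda>_. 0, 0) = ahb_exp_reward K \<gamma>' y (T - K) (Suc K) (\<lambda>_. 0, 0)"
      by (rule ER_cong) (rule c)
    show ?thesis unfolding ahb_regret_def ahb_total_def e by (rule refl)
  qed
  have eqS: "(\<Sum>t=K+1..T. \<gamma>' t) = (\<Sum>t=K+1..T. \<gamma> t)" unfolding \<gamma>'_def by (intro sum.cong) auto
  show ?thesis using regret_locale[OF T] eqR eqS by simp
qed

lemma bern_powr: "0 \<le> z \<Longrightarrow> 0 \<le> b \<Longrightarrow> b \<le> 1 \<Longrightarrow> z powr b \<le> 1 - b + b * z" for z b :: real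
proof (cases "z = 0")
  case True thus "0 \<le> z \<Longrightarrow> 0 \<le> b \<Longrightarrow> b \<le> 1 \<Longrightarrow> z powr b \<le> 1 - b + b * z" by simp
next
  case False
  assume "0 \<le> z" "0 \<le> b" "b \<le> 1"
  hence "exp (b * ln z) \<le> 1 - b + b * exp (ln z)" by (intro exp_convex_ineq)
  thus ?thesis using False \<open>0 \<le> z\<close> by (simp add: powr_def)
qed

lemma sum_powr:
  fixes \<alpha> :: real assumes a: "0 < \<alpha>" "\<alpha> < 1"
  shows "(\<Sum>t=1..T. real t powr (-\<alpha>)) \<le> real T powr (1 - \<alpha>) / (1 - \<alpha>)"
proof (induction T)
  case 0 show ?case by simp
next
  case (Suc T)
  define x where "x = real T + 1"
  define \<beta> where "\<beta> = 1 - \<alpha>"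
  have x: "x > 0" "x \<ge> 1" unfolding x_def by auto
  have b: "0 < \<beta>" "\<beta> < 1" using a unfolding \<beta>_def by auto
  define z where "z = real T / x"
  have z: "0 \<le> z" unfolding z_def using x by simp
  have Tz: "real T = x * z" unfolding z_def using x by simp
  have "x powr (1 + (-\<alpha>)) = x powr 1 * x powr (-\<alpha>)" by (rule powr_add)
  hence "x powr \<beta> = x * x powr (-\<alpha>)" using x unfolding \<beta>_def by simp
  hence xb: "x powr \<beta> / x = x powr (-\<alpha>)" using x by simp
  have "real T powr \<beta> = x powr \<beta> * z powr \<beta>" unfolding Tz using x z by (simp add: powr_mult)
  also have "\<dots> \<le> x powr \<beta> * (1 - \<beta> + \<beta> * z)" using bern_powr[OF z] b by (intro mult_left_mono) auto
  also have "\<dots> = x powr \<beta> - \<beta> * (x powr \<beta> / x)"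
    unfolding z_def x_def by (simp add: field_simps)
  finally have key: "real T powr \<beta> \<le> x powr \<beta> - \<beta> * x powr (-\<alpha>)" unfolding xb .
  have "(\<Sum>t=1..Suc T. real t powr (-\<alpha>)) = (\<Sum>t=1..T. real t powr (-\<alpha>)) + x powr (-\<alpha>)"
    by (simp add: x_def add.commute)
  also have "\<dots> \<le> real T powr \<beta> / \<beta> + x powr (-\<alpha>)" using Suc \<beta>_def by simp
  also have "\<dots> \<le> x powr \<beta> / \<beta>"
  proof -
    have "real T powr \<beta> / \<beta> \<le> (x powr \<beta> - \<beta> * x powr (-\<alpha>)) / \<beta>" using key b by (simp add: divide_right_mono)
    also have "\<dots> = x powr \<beta> / \<beta> - x powr (-\<alpha>)" using b by (simp add: field_simps)
    finally show ?thesis by simp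
  qed
  finally show ?case unfolding x_def \<beta>_def by (simp add: add.commute)
qed

lemma part2:
  fixes K :: nat and \<alpha> m M :: real and y :: "nat \<Rightarrow> nat \<Rightarrow> real" and T :: nat
  assumes K2: "K \<ge> 2" and a: "0 < \<alpha>" "\<alpha> < 1"
    and mM: "m < M" and yb: "\<forall>t\<ge>1. \<forall>a\<in>{1..K}. m \<le> y t a \<and> y t a \<le> M" and T: "T \<ge> 1"
  defines "\<gamma> \<equiv> (\<lambda>t::nat. min (1/2) (sqrt (5 * (1 - \<alpha>) * real K * ln (real K)) / (real t powr \<alpha>)))"
  shows "ahb_regret K \<gamma> y T
            \<le> (3 + 5 / sqrt (1 - \<alpha>)) * (M - m) * sqrt (real K * ln (real K))
                * real T powr (max \<alpha> (1 - \<alpha>))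
              + 10 * (M - m) * real K * ln (real K)"
proof -
  define L where "L = ln (real K)"
  have L: "L > 0" unfolding L_def using K2 by simp
  define c0 where "c0 = sqrt (5 * (1 - \<alpha>) * real K * L)"
  have c0: "c0 > 0" unfolding c0_def using L a K2 by simp
  have gdef: "\<gamma> t = min (1/2) (c0 / real t powr \<alpha>)" for t unfolding \<gamma>_def c0_def L_def by simp
  have H1: "\<forall>t\<ge>1. \<gamma> (Suc t) \<le> \<gamma> t"
  proof (intro allI impI)
    fix t :: nat assume t: "1 \<le> t"
    have "real t powr \<alpha> \<le> real (Suc t) powr \<alpha>" using a by (intro powr_mono2) auto
    moreover have "real t powr \<alpha> > 0" using t by simp
    ultimately have "c0 / real (Suc t) powr \<alpha> \<le> c0 / real t powr \<alpha>" using c0 by (intro divide_left_mono) auto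
    thus "\<gamma> (Suc t) \<le> \<gamma> t" unfolding gdef by (rule min.mono[OF order.refl])
  qed
  have gpos: "\<gamma> t > 0" if "t \<ge> 1" for t
  proof -
    have "real t powr \<alpha> > 0" using that by simp
    thus ?thesis unfolding gdef using c0 by simp
  qed
  have H2: "\<forall>t\<ge>1. 0 \<le> \<gamma> t \<and> \<gamma> t \<le> 1/2"
  proof (intro allI impI conjI)
    fix t :: nat assume "1 \<le> t"
    thus "0 \<le> \<gamma> t" using gpos less_imp_le by blast
    show "\<gamma> t \<le> 1/2" unfolding gdef by (rule min.cobounded1)
  qed
  have P1: "ahb_regret K \<gamma> y T \<le> 3 * (M - m) * sqrt (real K * real T * ln (real K))
              + 5 * (M - m) * real K * ln (real K) / \<gamma> T + (M - m) * (\<Sum>t=K+1..T. \<gamma> t)"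
    by (rule part1[OF K2 H1 H2 mM yb T gpos[OF T]])
  define d where "d = M - m"
  have d: "d > 0" unfolding d_def using mM by simp
  define B where "B = sqrt (real K * L)"
  define sa where "sa = sqrt (1 - \<alpha>)"
  define s5 where "s5 = sqrt (5::real)"
  define mx where "mx = max \<alpha> (1 - \<alpha>)"
  define Tr where "Tr = real T"
  define P where "P = Tr powr mx"
  have Tr: "Tr \<ge> 1" unfolding Tr_def using T by simp
  have B: "B > 0" unfolding B_def using L K2 by simp
  have sa: "sa > 0" unfolding sa_def using a by simp
  have s5: "s5 > 0" "s5 * s5 = 5" "2 * s5 \<le> 5" unfolding s5_def
  proof -
    show "sqrt 5 * sqrt 5 = (5::real)" by simp
    have "sqrt 5 \<le> sqrt ((5/2)^2::real)" by (intro real_sqrt_le_mono) (simp add: power2_eq_square)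
    thus "2 * sqrt 5 \<le> (5::real)" by simp
  qed simp
  have BB: "B * B = real K * L" unfolding B_def using L by simp
  have sasa: "sa * sa = 1 - \<alpha>" unfolding sa_def using a by simp
  have c0eq: "c0 = s5 * sa * B"
  proof -
    have e: "5 * (1 - \<alpha>) * real K * L = 5 * (1 - \<alpha>) * (real K * L)" by simp
    show ?thesis unfolding c0_def s5_def sa_def B_def e real_sqrt_mult by (rule refl)
  qed
  have Pa: "Tr powr \<alpha> \<le> P" unfolding P_def mx_def using Tr by (intro powr_mono) auto
  have Pb: "Tr powr (1 - \<alpha>) \<le> P" unfolding P_def mx_def using Tr by (intro powr_mono) auto
  have Ph: "sqrt Tr \<le> P"
  proof -
    have "1/2 \<le> max \<alpha> (1 - \<alpha>)" by linarith
    hence "Tr powr (1/2) \<le> P" unfolding P_def mx_def using Tr by (intro powr_mono) auto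
    thus ?thesis using Tr by (simp add: powr_half_sqrt)
  qed
  have TaP: "Tr powr \<alpha> > 0" using Tr by simp
  have t1: "3 * (M - m) * sqrt (real K * real T * ln (real K)) \<le> 3 * d * B * P"
  proof -
    have "sqrt (real K * real T * ln (real K)) = B * sqrt Tr"
      unfolding B_def Tr_def L_def by (simp add: real_sqrt_mult[symmetric] ac_simps)
    also have "\<dots> \<le> B * P" using Ph B by simp
    finally show ?thesis unfolding d_def using mM by (simp add: mult.assoc)
  qed
  have inv: "1 / \<gamma> T \<le> 2 + Tr powr \<alpha> / c0"
  proof (cases "1/2 \<le> c0 / Tr powr \<alpha>")
    case True
    hence g: "\<gamma> T = 1/2" unfolding gdef Tr_def by simp
    have "1 / \<gamma> T = 2" unfolding g by simp
    moreover have "Tr powr \<alpha> / c0 \<ge> 0" using TaP c0 by simp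
    ultimately show ?thesis by linarith
  next
    case False
    hence "\<gamma> T = c0 / Tr powr \<alpha>" unfolding gdef Tr_def by simp
    thus ?thesis by simp
  qed
  have t2: "5 * (M - m) * real K * ln (real K) / \<gamma> T \<le> 10 * d * real K * L + s5 * (d * B * P / sa)"
  proof -
    have e1: "s5 * B * (s5 * B) = (s5 * s5) * (B * B)" by (simp only: mult_ac)
    have e2: "5 * real K * L = s5 * B * (s5 * B)" unfolding e1 s5(2) BB by simp
    have kl: "5 * real K * L / c0 = s5 * B / sa"
      unfolding e2 c0eq using s5 sa B by (simp add: field_simps)
    have "5 * (M - m) * real K * ln (real K) / \<gamma> T = (5 * d * real K * L) * (1 / \<gamma> T)"
      unfolding d_def L_def by simp
    also have "\<dots> \<le> (5 * d * real K * L) * (2 + Tr powr \<alpha> / c0)"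
      using inv d L by (intro mult_left_mono) auto
    also have "\<dots> = 10 * d * real K * L + d * (5 * real K * L / c0) * Tr powr \<alpha>"
      by (simp add: field_simps)
    also have "\<dots> = 10 * d * real K * L + s5 * (d * B * Tr powr \<alpha> / sa)" unfolding kl by simp
    also have "\<dots> \<le> 10 * d * real K * L + s5 * (d * B * P / sa)"
      using Pa d B sa s5 by (intro add_left_mono mult_left_mono divide_right_mono) auto
    finally show ?thesis .
  qed
  have t3: "(M - m) * (\<Sum>t=K+1..T. \<gamma> t) \<le> s5 * (d * B * P / sa)"
  proof -
    have "(\<Sum>t=K+1..T. \<gamma> t) \<le> (\<Sum>t=1..T. \<gamma> t)"
      using gpos by (intro sum_mono2) (auto intro: less_imp_le)
    also have "\<dots> \<le> (\<Sum>t=1..T. c0 * real t powr (-\<alpha>))"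
    proof (rule sum_mono)
      fix t assume "t \<in> {1..T}"
      hence "\<gamma> t \<le> c0 / real t powr \<alpha>" unfolding gdef by simp
      thus "\<gamma> t \<le> c0 * real t powr (-\<alpha>)" by (simp add: powr_minus_divide)
    qed
    also have "\<dots> = c0 * (\<Sum>t=1..T. real t powr (-\<alpha>))" by (simp add: sum_distrib_left)
    also have "\<dots> \<le> c0 * (Tr powr (1 - \<alpha>) / (1 - \<alpha>))"
      using sum_powr[OF a, of T] c0 unfolding Tr_def by (intro mult_left_mono) auto
    also have "\<dots> = s5 * (B * Tr powr (1 - \<alpha>) / sa)"
      unfolding c0eq sasa[symmetric] using sa by (simp add: field_simps)
    also have "\<dots> \<le> s5 * (B * P / sa)"
      using Pb B sa s5 by (intro mult_left_mono divide_right_mono) auto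
    finally have "(\<Sum>t=K+1..T. \<gamma> t) \<le> s5 * (B * P / sa)" .
    hence "d * (\<Sum>t=K+1..T. \<gamma> t) \<le> d * (s5 * (B * P / sa))" using d by (intro mult_left_mono) auto
    thus ?thesis unfolding d_def by (simp add: field_simps)
  qed
  have Q0: "d * B * P / sa \<ge> 0" using d B sa P_def Tr by simp
  have "2 * s5 * (d * B * P / sa) \<le> 5 * (d * B * P / sa)" using s5 Q0 by (intro mult_right_mono) auto
  hence "s5 * (d * B * P / sa) + s5 * (d * B * P / sa) \<le> 5 * (d * B * P / sa)" by (simp add: algebra_simps)
  moreover have "(3 + 5 / sqrt (1 - \<alpha>)) * (M - m) * sqrt (real K * ln (real K)) * real T powr (max \<alpha> (1 - \<alpha>))
      = 3 * d * B * P + 5 * (d * B * P / sa)"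
    unfolding d_def B_def sa_def P_def Tr_def mx_def L_def by (simp add: field_simps)
  moreover have "10 * (M - m) * real K * ln (real K) = 10 * d * real K * L" unfolding d_def L_def by simp
  ultimately show ?thesis using P1 t1 t2 t3 by linarith
qed

theorem theorem2:
  fixes K :: nat
  assumes K2: "K \<ge> 2"
  shows
   "(\<forall>\<gamma> :: nat \<Rightarrow> real.
       (\<forall>t\<ge>1. \<gamma> (Suc t) \<le> \<gamma> t) \<and> (\<forall>t\<ge>1. 0 \<le> \<gamma> t \<and> \<gamma> t \<le> 1/2) \<longrightarrow>
       (\<forall>(m::real) (M::real) (y :: nat \<Rightarrow> nat \<Rightarrow> real) (T::nat).
          m < M \<and> (\<forall>t\<ge>1. \<forall>a\<in>{1..K}. m \<le> y t a \<and> y t a \<le> M) \<and> T \<ge> 1 \<and> \<gamma> T > 0 \<longrightarrow>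
          ahb_regret K \<gamma> y T
            \<le> 3 * (M - m) * sqrt (real K * real T * ln (real K))
              + 5 * (M - m) * real K * ln (real K) / \<gamma> T
              + (M - m) * (\<Sum>t=K+1..T. \<gamma> t)))
    \<and>
    (\<forall>\<alpha>::real. 0 < \<alpha> \<and> \<alpha> < 1 \<longrightarrow>
       (let \<gamma> = (\<lambda>t::nat. min (1/2) (sqrt (5 * (1 - \<alpha>) * real K * ln (real K)) / (real t powr \<alpha>)))
        in \<forall>(m::real) (M::real) (y :: nat \<Rightarrow> nat \<Rightarrow> real) (T::nat).
          m < M \<and> (\<forall>t\<ge>1. \<forall>a\<in>{1..K}. m \<le> y t a \<and> y t a \<le> M) \<and> T \<ge> 1 \<longrightarrow>
          ahb_regret K \<gamma> y T
            \<le> (3 + 5 / sqrt (1 - \<alpha>)) * (M - m) * sqrt (real K * ln (real K))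
                * real T powr (max \<alpha> (1 - \<alpha>))
              + 10 * (M - m) * real K * ln (real K)))"
proof -
  have P1: "\<forall>\<gamma> :: nat \<Rightarrow> real.
       (\<forall>t\<ge>1. \<gamma> (Suc t) \<le> \<gamma> t) \<and> (\<forall>t\<ge>1. 0 \<le> \<gamma> t \<and> \<gamma> t \<le> 1/2) \<longrightarrow>
       (\<forall>(m::real) (M::real) (y :: nat \<Rightarrow> nat \<Rightarrow> real) (T::nat).
          m < M \<and> (\<forall>t\<ge>1. \<forall>a\<in>{1..K}. m \<le> y t a \<and> y t a \<le> M) \<and> T \<ge> 1 \<and> \<gamma> T > 0 \<longrightarrow>
          ahb_regret K \<gamma> y T
            \<le> 3 * (M - m) * sqrt (real K * real T * ln (real K))
              + 5 * (M - m) * real K * ln (real K) / \<gamma> T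
              + (M - m) * (\<Sum>t=K+1..T. \<gamma> t))"
    apply (intro allI impI)
    apply (elim conjE)
    apply (rule part1[OF K2])
    apply assumption+
    done
  have P2: "\<forall>\<alpha>::real. 0 < \<alpha> \<and> \<alpha> < 1 \<longrightarrow>
       (let \<gamma> = (\<lambda>t::nat. min (1/2) (sqrt (5 * (1 - \<alpha>) * real K * ln (real K)) / (real t powr \<alpha>)))
        in \<forall>(m::real) (M::real) (y :: nat \<Rightarrow> nat \<Rightarrow> real) (T::nat).
          m < M \<and> (\<forall>t\<ge>1. \<forall>a\<in>{1..K}. m \<le> y t a \<and> y t a \<le> M) \<and> T \<ge> 1 \<longrightarrow>
          ahb_regret K \<gamma> y T
            \<le> (3 + 5 / sqrt (1 - \<alpha>)) * (M - m) * sqrt (real K * ln (real K))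
                * real T powr (max \<alpha> (1 - \<alpha>))
              + 10 * (M - m) * real K * ln (real K))"
    unfolding Let_def
    apply (intro allI impI)
    apply (elim conjE)
    apply (rule part2[OF K2])
    apply assumption+
    done
  show ?thesis using P1 P2 by (rule conjI)
qed

end
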